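(* In the 1SDI setting where Alice measures $A_0=\sigma_x$, $A_1=\sigma_y$, Bob measures $B_0=(\sigma_x-\sigma_y)/\sqrt2$, $B_1=(\sigma_x+\sigma_y)/\sqrt2$, and Charlie is a black box, the Svetlichny family $P^V_{SvF}$ ($0<V\le1$) demonstrates genuine tripartite steering (i.e. admits no 1SDI steering LHS-LHV model) if and only if $V>\frac1{\sqrt2}$.
   Context: Outcomes and settings: $a,b,c,x,y,z\in\{0,1\}$. For a qubit observable $O$ with eigenvalues $\pm1$, the measurement has projectors $M_0=(\mathbb 1+O)/2$, $M_1=(\mathbb 1-O)/2$; $M^A_{a|x}$, $M^B_{b|y}$ denote the projectors of $A_x$, $B_y$. Svetlichny family: $P^V_{SvF}(abc|xyz)=\frac{2+(-1)^{a\oplus b\oplus c\oplus xy\oplus yz\oplus xz}\sqrt2\,V}{16}$. 1SDI steering LHS-LHV (StLHS) model: $P(abc|xyz)=\sum_\lambda r_\lambda \mathrm{Tr}[(M^A_{a|x}\otimes M^B_{b|y})\rho^\lambda_{AB}]P_\lambda(c|z)+\sum_\lambda p_\lambda \mathrm{Tr}(M^A_{a|x}\rho^\lambda_A)P^Q_\lambda(bc|yz)+\sum_\lambda q_\lambda \mathrm{Tr}(M^B_{b|y}\rho^\lambda_B)P^Q_\lambda(ac|xz)$, with nonnegative weights summing to 1, $\rho^\lambda_{AB}$ two-qubit states, $\rho^\lambda_A,\rho^\lambda_B$ qubit states, $P_\lambda(c|z)$ arbitrary conditional distributions, and $P^Q_\lambda(bc|yz)=\mathrm{Tr}[(M^B_{b|y}\otimes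 N^\lambda_{c|z})\tau^\lambda_{BC}]$, $P^Q_\lambda(ac|xz)=\mathrm{Tr}[(M^A_{a|x}\otimes N^\lambda_{c|z})\tau^\lambda_{AC}]$ for some states $\tau^\lambda$ on $\mathbb C^2\otimes\mathbb C^d$ and POVMs $\{N^\lambda_{c|z}\}_c$ on $\mathbb C^d$. A correlation demonstrates genuine tripartite steering in the 1SDI scenario iff it admits no StLHS model. *)

theory Defs
  imports Complex_Main
begin

text \<open>Finite-dimensional complex matrices are represented as functions
  nat => nat => complex; the dimension n is passed explicitly and only
  the entries with indices below n matter.\<close>

type_synonym cmat = "nat \<Rightarrow> nat \<Rightarrow> complex"

definition idm :: cmat where
  "idm i j = (if i = j then 1 else 0)"

definition mmul :: "nat \<Rightarrow> cmat \<Rightarrow> cmat \<Rightarrow> cmat" where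
  "mmul n A B i j = (\<Sum>k<n. A i k * B k j)"

definition mtrace :: "nat \<Rightarrow> cmat \<Rightarrow> complex" where
  "mtrace n A = (\<Sum>i<n. A i i)"

text \<open>Kronecker product of an m x m matrix A with an n x n matrix B
  (an (m*n) x (m*n) matrix; index i of the product corresponds to the pair
  (i div n, i mod n)).\<close>
definition kron :: "nat \<Rightarrow> cmat \<Rightarrow> cmat \<Rightarrow> cmat" where
  "kron n A B i j = A (i div n) (j div n) * B (i mod n) (j mod n)"

definition psd :: "nat \<Rightarrow> cmat \<Rightarrow> bool" where
  "psd n A \<longleftrightarrow> (\<forall>v :: nat \<Rightarrow> complex.
      Im (\<Sum>i<n. \<Sum>j<n. cnj (v i) * A i j * v j) = 0 \<and>
      Re (\<Sum>i<n. \<Sum>j<n. cnj (v i) * A i j * v j) \<ge> 0)"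

definition density :: "nat \<Rightarrow> cmat \<Rightarrow> bool" where
  "density n \<rho> \<longleftrightarrow> psd n \<rho> \<and> mtrace n \<rho> = 1"

definition povm2 :: "nat \<Rightarrow> (nat \<Rightarrow> cmat) \<Rightarrow> bool" where
  "povm2 d N \<longleftrightarrow> psd d (N 0) \<and> psd d (N 1) \<and>
     (\<forall>i<d. \<forall>j<d. N 0 i j + N 1 i j = idm i j)"

definition sigma_x :: cmat where
  "sigma_x i j = (if i \<noteq> j then 1 else 0)"

definition sigma_y :: cmat where
  "sigma_y i j = (if i = 0 \<and> j = 1 then - \<i> else if i = 1 \<and> j = 0 then \<i> else 0)"

definition obsA :: "nat \<Rightarrow> cmat" where
  "obsA x = (if x = 0 then sigma_x else sigma_y)"

definition obsB :: "nat \<Rightarrow> cmat" where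
  "obsB y = (if y = 0
      then (\<lambda>i j. (sigma_x i j - sigma_y i j) / complex_of_real (sqrt 2))
      else (\<lambda>i j. (sigma_x i j + sigma_y i j) / complex_of_real (sqrt 2)))"

definition proj :: "cmat \<Rightarrow> nat \<Rightarrow> cmat" where
  "proj Ob a i j = (idm i j + (-1) ^ a * Ob i j) / 2"

definition MA :: "nat \<Rightarrow> nat \<Rightarrow> cmat" where
  "MA a x = proj (obsA x) a"

definition MB :: "nat \<Rightarrow> nat \<Rightarrow> cmat" where
  "MB b y = proj (obsB y) b"

text \<open>Correlations P a b c x y z (outcomes a b c, settings x y z, all in {0,1}).\<close>
type_synonym corr = "nat \<Rightarrow> nat \<Rightarrow> nat \<Rightarrow> nat \<Rightarrow> nat \<Rightarrow> nat \<Rightarrow> real"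

definition svf :: "real \<Rightarrow> corr" where
  "svf V a b c x y z =
     (2 + (-1) ^ (a + b + c + x * y + y * z + x * z) * sqrt 2 * V) / 16"

text \<open>The hidden variable ranges over
  a finite index set L of naturals (the three sums of the paper are taken
  over L, with weights r, p, q).\<close>
definition stlhs :: "corr \<Rightarrow> bool" where
  "stlhs P \<longleftrightarrow>
   (\<exists>(L :: nat set) (r :: nat \<Rightarrow> real) (p :: nat \<Rightarrow> real) (q :: nat \<Rightarrow> real)
      (rhoAB :: nat \<Rightarrow> cmat) (PC :: nat \<Rightarrow> nat \<Rightarrow> nat \<Rightarrow> real)
      (rhoA :: nat \<Rightarrow> cmat) (rhoB :: nat \<Rightarrow> cmat)
      (dBC :: nat \<Rightarrow> nat) (tauBC :: nat \<Rightarrow> cmat) (NBC :: nat \<Rightarrow> nat \<Rightarrow> nat \<Rightarrow> cmat)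
      (dAC :: nat \<Rightarrow> nat) (tauAC :: nat \<Rightarrow> cmat) (NAC :: nat \<Rightarrow> nat \<Rightarrow> nat \<Rightarrow> cmat).
     finite L \<and>
     (\<forall>l\<in>L. r l \<ge> 0 \<and> p l \<ge> 0 \<and> q l \<ge> 0) \<and>
     (\<Sum>l\<in>L. r l + p l + q l) = 1 \<and>
     (\<forall>l\<in>L.
        density 4 (rhoAB l) \<and> density 2 (rhoA l) \<and> density 2 (rhoB l) \<and>
        (\<forall>z\<in>{0,1}. (\<forall>c\<in>{0,1}. PC l c z \<ge> 0) \<and> PC l 0 z + PC l 1 z = 1) \<and>
        dBC l \<ge> 1 \<and> density (2 * dBC l) (tauBC l) \<and>
        (\<forall>z\<in>{0,1}. povm2 (dBC l) (\<lambda>c. NBC l c z)) \<and>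
        dAC l \<ge> 1 \<and> density (2 * dAC l) (tauAC l) \<and>
        (\<forall>z\<in>{0,1}. povm2 (dAC l) (\<lambda>c. NAC l c z))) \<and>
     (\<forall>a\<in>{0,1}. \<forall>b\<in>{0,1}. \<forall>c\<in>{0,1}. \<forall>x\<in>{0,1}. \<forall>y\<in>{0,1}. \<forall>z\<in>{0,1}.
        complex_of_real (P a b c x y z) =
          (\<Sum>l\<in>L. complex_of_real (r l)
              * mtrace 4 (mmul 4 (kron 2 (MA a x) (MB b y)) (rhoAB l))
              * complex_of_real (PC l c z))
        + (\<Sum>l\<in>L. complex_of_real (p l)
              * mtrace 2 (mmul 2 (MA a x) (rhoA l))
              * mtrace (2 * dBC l) (mmul (2 * dBC l) (kron (dBC l) (MB b y) (NBC l c z)) (tauBC l)))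
        + (\<Sum>l\<in>L. complex_of_real (q l)
              * mtrace 2 (mmul 2 (MB b y) (rhoB l))
              * mtrace (2 * dAC l) (mmul (2 * dAC l) (kron (dAC l) (MA a x) (NAC l c z)) (tauAC l)))))"

definition genuine_steering_1sdi :: "corr \<Rightarrow> bool" where
  "genuine_steering_1sdi P \<longleftrightarrow> \<not> stlhs P"

end

theory Submission
  imports Defs
begin


definition ip :: "nat \<Rightarrow> (nat \<Rightarrow> complex) \<Rightarrow> (nat \<Rightarrow> complex) \<Rightarrow> complex" where
  "ip n u w = (\<Sum>i<n. cnj (u i) * w i)"
definition mv :: "nat \<Rightarrow> cmat \<Rightarrow> (nat \<Rightarrow> complex) \<Rightarrow> (nat \<Rightarrow> complex)" where
  "mv n A w i = (\<Sum>j<n. A i j * w j)"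
definition ns :: "nat \<Rightarrow> (nat \<Rightarrow> complex) \<Rightarrow> real" where
  "ns n u = (\<Sum>i<n. (cmod (u i))\<^sup>2)"

lemma qf_ip: "(\<Sum>i<n. \<Sum>j<n. cnj (v i) * A i j * v j) = ip n v (mv n A v)"
  by (simp add: ip_def mv_def sum_distrib_left mult.assoc)

lemma ip_self: "ip n u u = complex_of_real (ns n u)"
  unfolding ip_def ns_def of_real_sum
  by (rule sum.cong) (simp_all add: complex_norm_square[symmetric] mult.commute)

lemma ns_nonneg: "ns n u \<ge> 0"
  by (simp add: ns_def sum_nonneg)

lemma psd_ip: "psd n A \<Longrightarrow> Im (ip n v (mv n A v)) = 0 \<and> Re (ip n v (mv n A v)) \<ge> 0"
  unfolding psd_def qf_ip[symmetric] by blast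

lemma ip_cnj: "ip n u w = cnj (ip n w u)"
  by (simp add: ip_def mult.commute)

lemma sum_two:
  fixes i j n :: nat and g :: "nat \<Rightarrow> complex"
  assumes "i < n" "j < n" "i \<noteq> j"
  shows "(\<Sum>k<n. g k * (if k = i then \<alpha> else if k = j then \<beta> else 0)) = g i * \<alpha> + g j * \<beta>"
proof -
  have "(\<Sum>k<n. g k * (if k = i then \<alpha> else if k = j then \<beta> else 0)) =
          (\<Sum>k<n. (if k = i then g i * \<alpha> else 0) + (if k = j then g j * \<beta> else 0))"
    by (rule sum.cong) (use assms in auto)
  also have "\<dots> = g i * \<alpha> + g j * \<beta>" using assms by (simp add: sum.distrib)
  finally show ?thesis .
qed

lemma qf_two:
  fixes i j n :: nat
  assumes "i < n" "j < n" "i \<noteq> j"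
  shows "ip n (\<lambda>m. if m = i then \<alpha> else if m = j then \<beta> else 0) (mv n A (\<lambda>m. if m = i then \<alpha> else if m = j then \<beta> else 0))
       = cnj \<alpha> * A i i * \<alpha> + cnj \<alpha> * A i j * \<beta> + cnj \<beta> * A j i * \<alpha> + cnj \<beta> * A j j * \<beta>"
proof -
  have m: "\<And>k. mv n A (\<lambda>m. if m = i then \<alpha> else if m = j then \<beta> else 0) k = A k i * \<alpha> + A k j * \<beta>"
    unfolding mv_def using sum_two[OF assms] by simp
  have "ip n (\<lambda>m. if m = i then \<alpha> else if m = j then \<beta> else 0) (mv n A (\<lambda>m. if m = i then \<alpha> else if m = j then \<beta> else 0))
     = (\<Sum>k<n. (A k i * \<alpha> + A k j * \<beta>) * cnj (if k = i then \<alpha> else if k = j then \<beta> else 0))"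
    unfolding ip_def m by (simp add: mult.commute)
  also have "\<dots> = (\<Sum>k<n. (A k i * \<alpha> + A k j * \<beta>) * (if k = i then cnj \<alpha> else if k = j then cnj \<beta> else 0))"
    by (rule sum.cong) auto
  also have "\<dots> = cnj \<alpha> * A i i * \<alpha> + cnj \<alpha> * A i j * \<beta> + cnj \<beta> * A j i * \<alpha> + cnj \<beta> * A j j * \<beta>" using sum_two[OF assms, of "\<lambda>k. A k i * \<alpha> + A k j * \<beta>"] by (simp add: algebra_simps)
  finally show ?thesis .
qed

lemma qf_one:
  fixes i n :: nat
  assumes "i < n"
  shows "ip n (\<lambda>m. if m = i then 1 else 0) (mv n A (\<lambda>m. if m = i then 1 else 0)) = A i i"
proof -
  have m: "\<And>k. mv n A (\<lambda>m. if m = i then 1 else 0) k = A k i"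
  proof -
    fix k
    have "(\<Sum>j<n. A k j * (if j = i then 1 else 0)) = (\<Sum>j<n. if j = i then A k i else 0)"
      by (rule sum.cong) auto
    then show "mv n A (\<lambda>m. if m = i then 1 else 0) k = A k i" using assms by (simp add: mv_def)
  qed
  have "(\<Sum>k<n. cnj (if k = i then 1 else 0) * A k i) = (\<Sum>k<n. if k = i then A i i else 0)"
    by (rule sum.cong) auto
  then show ?thesis using assms by (simp add: ip_def m)
qed

lemma psd_herm:
  assumes "psd n A" "i < n" "j < n"
  shows "A j i = cnj (A i j)"
proof (cases "i = j")
  case True
  have "Im (A i i) = 0" using psd_ip[OF assms(1), of "\<lambda>m. if m = i then 1 else 0"] qf_one[OF assms(2), of A] by simp
  then show ?thesis using True by (simp add: complex_eq_iff)
next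
  case False
  have ii: "Im (A i i) = 0" using psd_ip[OF assms(1), of "\<lambda>m. if m = i then 1 else 0"] qf_one[OF assms(2), of A] by simp
  have jj: "Im (A j j) = 0" using psd_ip[OF assms(1), of "\<lambda>m. if m = j then 1 else 0"] qf_one[OF assms(3), of A] by simp
  have 1: "Im (A i i + A i j + A j i + A j j) = 0"
    using psd_ip[OF assms(1), of "\<lambda>m. if m = i then 1 else if m = j then 1 else 0"] qf_two[OF assms(2,3) False, of 1 1 A] by simp
  have 2: "Im (A i i + \<i> * A i j - \<i> * A j i + A j j) = 0"
    using psd_ip[OF assms(1), of "\<lambda>m. if m = i then 1 else if m = j then \<i> else 0"] qf_two[OF assms(2,3) False, of 1 \<i> A]
    by (simp add: algebra_simps)
  show ?thesis using ii jj 1 2 by (simp add: complex_eq_iff)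
qed


abbreviation qf :: "nat \<Rightarrow> cmat \<Rightarrow> (nat \<Rightarrow> complex) \<Rightarrow> complex" where
  "qf n A v \<equiv> (\<Sum>i<n. \<Sum>j<n. cnj (v i) * A i j * v j)"

lemma sum_if_const: "(\<Sum>j\<in>S. if P then f j else 0) = (if P then sum f S else 0)"
  by simp

lemma qf_shift:
  fixes m n :: nat
  assumes "m < n"
  shows "qf n A (\<lambda>i. v i + (if i = m then t else 0)) =
         qf n A v + cnj t * (\<Sum>j<n. A m j * v j) + t * (\<Sum>i<n. cnj (v i) * A i m) + cnj t * A m m * t"
proof -
  have "qf n A (\<lambda>i. v i + (if i = m then t else 0)) =
        (\<Sum>i<n. \<Sum>j<n. cnj (v i) * A i j * v j + cnj (v i) * A i j * (if j = m then t else 0)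
             + (if i = m then cnj t else 0) * A i j * v j + (if i = m then cnj t else 0) * A i j * (if j = m then t else 0))"
    by (rule sum.cong, simp, rule sum.cong, simp) (simp add: algebra_simps)
  also have "\<dots> = qf n A v + (\<Sum>i<n. \<Sum>j<n. cnj (v i) * A i j * (if j = m then t else 0))
      + (\<Sum>i<n. \<Sum>j<n. (if i = m then cnj t else 0) * A i j * v j)
      + (\<Sum>i<n. \<Sum>j<n. (if i = m then cnj t else 0) * A i j * (if j = m then t else 0))"
    by (simp add: sum.distrib)
  also have "(\<Sum>i<n. \<Sum>j<n. cnj (v i) * A i j * (if j = m then t else 0)) = t * (\<Sum>i<n. cnj (v i) * A i m)"
    using assms by (simp add: sum_distrib_left mult.commute mult.left_commute if_distrib[of "\<lambda>x. _ * x"] cong: if_cong)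
  also have "(\<Sum>i<n. \<Sum>j<n. (if i = m then cnj t else 0) * A i j * v j) = cnj t * (\<Sum>j<n. A m j * v j)"
    using assms by (simp add: sum_distrib_left mult.assoc if_distrib[of "\<lambda>x. x * _"] sum_if_const cong: if_cong)
  also have "(\<Sum>i<n. \<Sum>j<n. (if i = m then cnj t else 0) * A i j * (if j = m then t else 0)) = cnj t * A m m * t"
    using assms by (simp add: if_distrib[of "\<lambda>x. x * _"] if_distrib[of "\<lambda>x. _ * x"] cong: if_cong)
  finally show ?thesis by (simp add: algebra_simps)
qed

lemma sum_delta_r: "j < (n::nat) \<Longrightarrow> (\<Sum>k<n. g k * (if k = j then 1 else 0)) = (g j :: complex)"
  by (simp add: if_distrib[of "\<lambda>x. _ * x"] cong: if_cong)
lemma sum_delta_l: "j < (n::nat) \<Longrightarrow> (\<Sum>k<n. cnj (if k = j then 1 else 0) * g k) = (g j :: complex)"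
  by (simp add: if_distrib[of "\<lambda>x. x * _"] if_distrib[of cnj] cong: if_cong)

lemma psd_qf: "psd n A \<Longrightarrow> Im (qf n A v) = 0 \<and> Re (qf n A v) \<ge> 0"
  unfolding psd_def by blast

lemma qf_e: "j < (n::nat) \<Longrightarrow> qf n A (\<lambda>i. if i = j then 1 else 0) = A j j"
  using qf_one[of j n A] qf_ip[where n=n and v="\<lambda>i. if i = j then 1 else 0" and A=A] by simp

lemma psd_row_zero:
  assumes "psd n A" "m < n" "A m m = 0" "j < n"
  shows "A m j = 0"
proof (rule ccontr)
  assume x0: "A m j \<noteq> 0"
  then have jm: "j \<noteq> m" using assms by auto
  define x where "x = A m j"
  have hx: "A j m = cnj x" using psd_herm[OF assms(1,2,4)] x_def by simp
  define s :: real where "s = (\<bar>Re (A j j)\<bar> + 1) / (2 * (cmod x)\<^sup>2)"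
  define t where "t = - complex_of_real s * x"
  have q: "qf n A (\<lambda>i. (if i = j then 1 else 0) + (if i = m then t else 0)) = A j j + cnj t * x + t * cnj x"
    using qf_shift[OF assms(2), where A=A and v="\<lambda>i. if i = j then 1 else 0" and t=t] qf_e[OF assms(4), where A=A]
      sum_delta_r[OF assms(4), where g="\<lambda>k. A m k"] sum_delta_l[OF assms(4), where g="\<lambda>k. A k m"] assms(3) hx x_def
    by simp
  have "Re (cnj t * x + t * cnj x) = - 2 * s * (cmod x)\<^sup>2"
    unfolding t_def by (simp add: cmod_power2; simp add: power2_eq_square algebra_simps)
  also have "\<dots> = - (\<bar>Re (A j j)\<bar> + 1)" using x0 x_def by (simp add: s_def)
  finally have "Re (qf n A (\<lambda>i. (if i = j then 1 else 0) + (if i = m then t else 0))) < 0"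
    unfolding q by simp
  then show False using assms(1) unfolding psd_def by (meson not_le)
qed


lemma shift_alg: "(a::real) > 0 \<Longrightarrow> Q + cnj (- b / complex_of_real a) * b + (- b / complex_of_real a) * cnj b
   + cnj (- b / complex_of_real a) * complex_of_real a * (- b / complex_of_real a) = Q - cnj b * b / complex_of_real a"
  by (simp add: field_simps)

lemma sqrt_alg: "(a::real) > 0 \<Longrightarrow> x / complex_of_real (sqrt a) * cnj (y / complex_of_real (sqrt a)) = x * cnj y / complex_of_real a"
proof -
  assume a: "a > 0"
  have "complex_of_real (sqrt a) * complex_of_real (sqrt a) = complex_of_real a"
    using a by (simp flip: of_real_mult)
  then show ?thesis by (simp add: field_simps)
qed
lemma chol_aux:
  "\<forall>A. psd n A \<and> (\<forall>i<n. \<forall>j<n. (i < n - k \<or> j < n - k) \<longrightarrow> A i j = 0) \<longrightarrow>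
     (\<exists>(F :: nat \<Rightarrow> nat \<Rightarrow> complex) K. \<forall>i<n. \<forall>j<n. A i j = (\<Sum>q<K. F q i * cnj (F q j)))"
proof (induction k)
  case 0
  show ?case by (intro allI impI exI[of _ "\<lambda>_ _. 0"] exI[of _ 0]) auto
next
  case (Suc k)
  show ?case
  proof (intro allI impI)
    fix A assume h: "psd n A \<and> (\<forall>i<n. \<forall>j<n. (i < n - Suc k \<or> j < n - Suc k) \<longrightarrow> A i j = 0)"
    show "\<exists>(F :: nat \<Rightarrow> nat \<Rightarrow> complex) K. \<forall>i<n. \<forall>j<n. A i j = (\<Sum>q<K. F q i * cnj (F q j))"
    proof (cases "n \<le> k")
      case True
      then show ?thesis using Suc.IH h by simp
    next
      case False
      define m where "m = n - Suc k"
      have mn: "m < n" and nk: "n - k = Suc m" using False m_def by auto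
      have psdA: "psd n A" using h by simp
      have supp: "\<And>i j. i < n \<Longrightarrow> j < n \<Longrightarrow> i < m \<or> j < m \<Longrightarrow> A i j = 0" using h m_def by auto
      have amm: "Im (A m m) = 0 \<and> Re (A m m) \<ge> 0"
        using qf_e[OF mn, where A=A] psd_qf[OF psdA, where v="\<lambda>i. if i = m then 1 else 0"] by simp
      show ?thesis
      proof (cases "A m m = 0")
        case True
        have r: "\<And>j. j < n \<Longrightarrow> A m j = 0" using psd_row_zero[OF psdA mn True] .
        have c: "\<And>j. j < n \<Longrightarrow> A j m = 0" using r psd_herm[OF psdA mn] by simp
        have "\<forall>i<n. \<forall>j<n. (i < n - k \<or> j < n - k) \<longrightarrow> A i j = 0"
        proof (intro allI impI)
          fix i j assume ij: "i < n" "j < n" "i < n - k \<or> j < n - k"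
          then have "i < m \<or> j < m \<or> i = m \<or> j = m" unfolding nk by auto
          then show "A i j = 0" using supp[OF ij(1,2)] r[OF ij(2)] c[OF ij(1)] by blast
        qed
        then show ?thesis using Suc.IH psdA by blast
      next
        case False
        define a where "a = Re (A m m)"
        have Amm: "A m m = complex_of_real a" using amm a_def by (simp add: complex_eq_iff)
        have a0: "a \<ge> 0" using amm unfolding a_def by simp
        have "a \<noteq> 0" using False Amm by auto
        then have apos: "a > 0" using a0 by simp
        define A' where "A' = (\<lambda>i j. A i j - A i m * cnj (A j m) / complex_of_real a)"
        have herm: "\<And>i j. i < n \<Longrightarrow> j < n \<Longrightarrow> A j i = cnj (A i j)" using psd_herm[OF psdA] by blast
        have psdA': "psd n A'"
          unfolding psd_def
        proof
          fix v :: "nat \<Rightarrow> complex"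
          define \<beta> where "\<beta> = (\<Sum>j<n. A m j * v j)"
          have b2: "(\<Sum>i<n. cnj (v i) * A i m) = cnj \<beta>"
            unfolding \<beta>_def by (simp add: herm[OF mn] mult.commute)
          have b1: "(\<Sum>j<n. cnj (A j m) * v j) = \<beta>"
            unfolding \<beta>_def by (rule sum.cong) (simp_all add: herm[OF mn])
          have "qf n A' v = qf n A v - (\<Sum>i<n. \<Sum>j<n. cnj (v i) * (A i m * cnj (A j m) / complex_of_real a) * v j)"
            unfolding A'_def by (simp add: right_diff_distrib left_diff_distrib sum_subtractf)
          also have "(\<Sum>i<n. \<Sum>j<n. cnj (v i) * (A i m * cnj (A j m) / complex_of_real a) * v j)
                = (\<Sum>i<n. cnj (v i) * A i m) * (\<Sum>j<n. cnj (A j m) * v j) / complex_of_real a"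
            by (simp add: sum_product sum_divide_distrib mult_ac, rule sum.swap)
          finally have e1: "qf n A' v = qf n A v - cnj \<beta> * \<beta> / complex_of_real a" using b1 b2 by simp
          define t where "t = - \<beta> / complex_of_real a"
          define w where "w = (\<lambda>i. v i + (if i = m then t else 0))"
          have e2: "qf n A w = qf n A v - cnj \<beta> * \<beta> / complex_of_real a"
            unfolding w_def
            using qf_shift[OF mn, where A=A and v=v and t=t] b2 Amm shift_alg[OF apos, of "qf n A v" \<beta>]
            unfolding \<beta>_def[symmetric] t_def by simp
          have eq: "qf n A' v = qf n A w" using e1 e2 by simp
          show "Im (qf n A' v) = 0 \<and> Re (qf n A' v) \<ge> 0" unfolding eq by (rule psd_qf[OF psdA])
        qed
        have supp': "\<forall>i<n. \<forall>j<n. (i < n - k \<or> j < n - k) \<longrightarrow> A' i j = 0"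
        proof (intro allI impI)
          fix i j assume ij: "i < n" "j < n" "i < n - k \<or> j < n - k"
          then have "i < m \<or> j < m \<or> i = m \<or> j = m" unfolding nk by auto
          then show "A' i j = 0"
          proof (elim disjE)
            assume "i < m" then show ?thesis unfolding A'_def using supp ij mn by simp
          next
            assume "j < m" then have "A j m = 0" using supp ij mn by simp
            then show ?thesis unfolding A'_def using supp ij mn \<open>j < m\<close> by simp
          next
            assume "i = m" then show ?thesis unfolding A'_def using herm[OF ij(2) mn] apos Amm by simp
          next
            assume "j = m" then show ?thesis unfolding A'_def using apos Amm by simp
          qed
        qed
        obtain F :: "nat \<Rightarrow> nat \<Rightarrow> complex" and K :: nat where FK: "\<forall>i<n. \<forall>j<n. A' i j = (\<Sum>q<K. F q i * cnj (F q j))"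
          using Suc.IH[rule_format, OF conjI[OF psdA' supp']] by (elim exE) blast
        define G where "G = F(K := (\<lambda>i. A i m / complex_of_real (sqrt a)))"
        have "\<forall>i<n. \<forall>j<n. A i j = (\<Sum>q<Suc K. G q i * cnj (G q j))"
        proof (intro allI impI)
          fix i j assume ij: "i < n" "j < n"
          have "(\<Sum>q<Suc K. G q i * cnj (G q j)) = (\<Sum>q<K. F q i * cnj (F q j)) + A i m / complex_of_real (sqrt a) * cnj (A j m / complex_of_real (sqrt a))"
          proof -
            have "(\<Sum>q<K. G q i * cnj (G q j)) = (\<Sum>q<K. F q i * cnj (F q j))"
              by (rule sum.cong) (auto simp: G_def)
            then show ?thesis by (simp add: G_def)
          qed
          also have "\<dots> = A' i j + A i m * cnj (A j m) / complex_of_real a"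
            using FK ij sqrt_alg[OF apos] by simp
          finally show "A i j = (\<Sum>q<Suc K. G q i * cnj (G q j))" unfolding A'_def by simp
        qed
        then show ?thesis by (intro exI)
      qed
    qed
  qed
qed

lemma psd_chol:
  assumes "psd n A"
  shows "\<exists>(F :: nat \<Rightarrow> nat \<Rightarrow> complex) K. \<forall>i<n. \<forall>j<n. A i j = (\<Sum>q<K. F q i * cnj (F q j))"
  using chol_aux[of n n] assms by simp


lemma sum_block: fixes n k :: nat shows "(\<Sum>i<n*k. g i) = (\<Sum>a<n. \<Sum>s<k. g (a*k + s))"
proof -
  have "(\<Sum>i<n*k. g i) = (\<Sum>a<n. sum g {a*k..<a*k+k})" by (rule sum.nat_group[symmetric])
  also have "\<dots> = (\<Sum>a<n. \<Sum>s<k. g (a*k + s))"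
  proof (rule sum.cong, simp)
    fix a
    show "sum g {a*k..<a*k+k} = (\<Sum>s<k. g (a*k + s))"
      using sum.shift_bounds_nat_ivl[of g 0 "a*k" k] by (simp add: atLeast0LessThan add.commute)
  qed
  finally show ?thesis .
qed

lemma tr_chol:
  assumes "\<forall>i<N. \<forall>j<N. \<tau> i j = (\<Sum>q<K. F q i * cnj (F q j))"
  shows "mtrace N (mmul N M \<tau>) = (\<Sum>q<K. ip N (F q) (mv N M (F q)))"
proof -
  have "mtrace N (mmul N M \<tau>) = (\<Sum>i<N. \<Sum>j<N. M i j * (\<Sum>q<K. F q j * cnj (F q i)))"
    unfolding mtrace_def mmul_def using assms by (intro sum.cong refl) auto
  also have "\<dots> = (\<Sum>i<N. \<Sum>q<K. \<Sum>j<N. cnj (F q i) * (M i j * F q j))"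
    by (simp add: sum_distrib_left mult_ac sum.swap[of _ "{..<N}" "{..<K}"])
  also have "\<dots> = (\<Sum>q<K. ip N (F q) (mv N M (F q)))"
    unfolding ip_def mv_def by (simp add: sum_distrib_left sum.swap[of _ "{..<N}" "{..<K}"])
  finally show ?thesis .
qed

lemma block_ip:
  fixes d :: nat
  shows "ip (2*d) \<psi> (mv (2*d) (kron d A C) \<psi>) =
    (\<Sum>a<2. \<Sum>b<2. A a b * ip d (\<lambda>s. \<psi> (a*d+s)) (mv d C (\<lambda>s. \<psi> (b*d+s))))"
proof (cases "d = 0")
  case True then show ?thesis by (simp add: ip_def)
next
  case False
  then have dp: "d > 0" by simp
  have mvk: "\<And>a s. s < d \<Longrightarrow> mv (2*d) (kron d A C) \<psi> (a*d+s) = (\<Sum>b<2. A a b * mv d C (\<lambda>s. \<psi> (b*d+s)) s)"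
  proof -
    fix a s assume s: "s < d"
    have "mv (2*d) (kron d A C) \<psi> (a*d+s) = (\<Sum>b<2. \<Sum>t<d. kron d A C (a*d+s) (b*d+t) * \<psi> (b*d+t))"
      unfolding mv_def by (rule sum_block)
    also have "\<dots> = (\<Sum>b<2. \<Sum>t<d. A a b * (C s t * \<psi> (b*d+t)))"
      using s dp by (intro sum.cong refl) (simp add: kron_def)
    finally show "mv (2*d) (kron d A C) \<psi> (a*d+s) = (\<Sum>b<2. A a b * mv d C (\<lambda>s. \<psi> (b*d+s)) s)"
      by (simp add: mv_def sum_distrib_left)
  qed
  have "ip (2*d) \<psi> (mv (2*d) (kron d A C) \<psi>) = (\<Sum>a<2. \<Sum>s<d. cnj (\<psi> (a*d+s)) * mv (2*d) (kron d A C) \<psi> (a*d+s))"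
    unfolding ip_def by (rule sum_block)
  also have "\<dots> = (\<Sum>a<2. \<Sum>s<d. \<Sum>b<2. A a b * (cnj (\<psi> (a*d+s)) * mv d C (\<lambda>s. \<psi> (b*d+s)) s))"
    by (intro sum.cong refl) (simp add: mvk sum_distrib_left mult.left_commute)
  also have "\<dots> = (\<Sum>a<2. \<Sum>b<2. A a b * ip d (\<lambda>s. \<psi> (a*d+s)) (mv d C (\<lambda>s. \<psi> (b*d+s))))"
    unfolding ip_def by (simp add: sum_distrib_left sum.swap[of _ "{..<d}" "{..<2}"])
  finally show ?thesis .
qed

lemma block_ns: "ns (2*d) \<psi> = ns d (\<lambda>s. \<psi> s) + ns d (\<lambda>s. \<psi> (d+s))"
  unfolding ns_def using sum_block[where n=2 and k=d and g="\<lambda>i. (cmod (\<psi> i))\<^sup>2"] by (simp add: numeral_2_eq_2)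


lemma lagr: "((cmod p)\<^sup>2 + (cmod q)\<^sup>2) * ((cmod u)\<^sup>2 + (cmod w)\<^sup>2)
   = (cmod (p*u + q*w))\<^sup>2 + (cmod (cnj q * u - cnj p * w))\<^sup>2"
  by (simp only: cmod_power2) (simp add: power2_eq_square algebra_simps)

lemma ns_lin: "ns d (\<lambda>i. p * u i + q * w i) \<le> ((cmod p)\<^sup>2 + (cmod q)\<^sup>2) * (ns d u + ns d w)"
proof -
  have "ns d (\<lambda>i. p * u i + q * w i) \<le> (\<Sum>i<d. ((cmod p)\<^sup>2 + (cmod q)\<^sup>2) * ((cmod (u i))\<^sup>2 + (cmod (w i))\<^sup>2))"
    unfolding ns_def by (rule sum_mono) (simp add: lagr)
  also have "\<dots> = ((cmod p)\<^sup>2 + (cmod q)\<^sup>2) * (ns d u + ns d w)"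
    by (simp add: ns_def distrib_left sum_distrib_left sum.distrib)
  finally show ?thesis .
qed

lemma amgm_pt: "2 * Re (cnj a * b) \<le> 4 * (cmod a)\<^sup>2 + (cmod b)\<^sup>2 / 4"
proof -
  have "0 \<le> (cmod (2 * a - b / 2))\<^sup>2" by simp
  also have "(cmod (2 * a - b / 2))\<^sup>2 = 4 * (cmod a)\<^sup>2 + (cmod b)\<^sup>2 / 4 - 2 * Re (cnj a * b)"
    by (simp only: cmod_power2) (simp add: power2_eq_square algebra_simps)
  finally show ?thesis by simp
qed

lemma amgm_ip: "2 * Re (ip d u w) \<le> 4 * ns d u + ns d w / 4"
proof -
  have "2 * Re (ip d u w) = (\<Sum>i<d. 2 * Re (cnj (u i) * w i))"
    by (simp add: ip_def Re_sum sum_distrib_left)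
  also have "\<dots> \<le> (\<Sum>i<d. 4 * (cmod (u i))\<^sup>2 + (cmod (w i))\<^sup>2 / 4)"
    by (rule sum_mono) (rule amgm_pt)
  also have "\<dots> = 4 * ns d u + ns d w / 4"
    by (simp add: ns_def sum.distrib sum_distrib_left sum_divide_distrib)
  finally show ?thesis .
qed

lemma ip_lin2: "ip d u (\<lambda>i. p * v i + q * w i) = p * ip d u v + q * ip d u w"
  by (simp add: ip_def sum.distrib sum_distrib_left algebra_simps)

lemma gen_bound:
  fixes \<alpha> \<beta> :: real
  assumes h0: "ip d \<phi>1 (mv d D0 \<phi>0) = cnj (ip d \<phi>0 (mv d D0 \<phi>1))"
      and h1: "ip d \<phi>1 (mv d D1 \<phi>0) = cnj (ip d \<phi>0 (mv d D1 \<phi>1))"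
      and c0: "ns d (mv d D0 \<phi>1) \<le> ns d \<phi>1"
      and c1: "ns d (mv d D1 \<phi>1) \<le> ns d \<phi>1"
      and o0: "cmod o0 = 1" and o1: "cmod o1 = 1"
      and ab: "\<alpha>\<^sup>2 + \<beta>\<^sup>2 \<le> 4"
  shows "Re (complex_of_real \<alpha> * (o0 * ip d \<phi>0 (mv d D0 \<phi>1) + cnj o0 * ip d \<phi>1 (mv d D0 \<phi>0))
           + complex_of_real \<beta> * (o0 * ip d \<phi>0 (mv d D1 \<phi>1) + cnj o0 * ip d \<phi>1 (mv d D1 \<phi>0))
           + complex_of_real \<beta> * (o1 * ip d \<phi>0 (mv d D0 \<phi>1) + cnj o1 * ip d \<phi>1 (mv d D0 \<phi>0))
           - complex_of_real \<alpha> * (o1 * ip d \<phi>0 (mv d D1 \<phi>1) + cnj o1 * ip d \<phi>1 (mv d D1 \<phi>0)))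
         \<le> 4 * (ns d \<phi>0 + ns d \<phi>1)"
proof -
  define z0 where "z0 = ip d \<phi>0 (mv d D0 \<phi>1)"
  define z1 where "z1 = ip d \<phi>0 (mv d D1 \<phi>1)"
  define p where "p = complex_of_real \<alpha> * o0 + complex_of_real \<beta> * o1"
  define q where "q = complex_of_real \<beta> * o0 - complex_of_real \<alpha> * o1"
  define v where "v = (\<lambda>i. p * mv d D0 \<phi>1 i + q * mv d D1 \<phi>1 i)"
  have lhs: "Re (complex_of_real \<alpha> * (o0 * ip d \<phi>0 (mv d D0 \<phi>1) + cnj o0 * ip d \<phi>1 (mv d D0 \<phi>0))
           + complex_of_real \<beta> * (o0 * ip d \<phi>0 (mv d D1 \<phi>1) + cnj o0 * ip d \<phi>1 (mv d D1 \<phi>0))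
           + complex_of_real \<beta> * (o1 * ip d \<phi>0 (mv d D0 \<phi>1) + cnj o1 * ip d \<phi>1 (mv d D0 \<phi>0))
           - complex_of_real \<alpha> * (o1 * ip d \<phi>0 (mv d D1 \<phi>1) + cnj o1 * ip d \<phi>1 (mv d D1 \<phi>0)))
        = 2 * Re (p * z0 + q * z1)"
    unfolding h0 h1 z0_def[symmetric] z1_def[symmetric] p_def q_def
    by (simp add: algebra_simps)
  have pz: "p * z0 + q * z1 = ip d \<phi>0 v"
    unfolding v_def ip_lin2 z0_def z1_def ..
  have pq: "(cmod p)\<^sup>2 + (cmod q)\<^sup>2 = 2 * (\<alpha>\<^sup>2 + \<beta>\<^sup>2)"
    using lagr[of "complex_of_real \<alpha>" "complex_of_real \<beta>" o0 o1] o0 o1 unfolding p_def q_def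
    by (simp add: norm_of_real power2_eq_square algebra_simps)
  have nv: "ns d v \<le> 16 * ns d \<phi>1"
  proof -
    have "ns d v \<le> ((cmod p)\<^sup>2 + (cmod q)\<^sup>2) * (ns d (mv d D0 \<phi>1) + ns d (mv d D1 \<phi>1))"
      unfolding v_def by (rule ns_lin)
    also have "\<dots> \<le> 8 * (2 * ns d \<phi>1)"
      apply (rule mult_mono)
      using pq ab c0 c1 by (auto simp: ns_nonneg add_nonneg_nonneg)
    finally show ?thesis by simp
  qed
  have "2 * Re (p * z0 + q * z1) \<le> 4 * ns d \<phi>0 + ns d v / 4"
    unfolding pz by (rule amgm_ip)
  then show ?thesis unfolding lhs using nv by simp
qed


lemma ip_herm:
  assumes "\<forall>i<d. \<forall>j<d. D j i = cnj (D i j)"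
  shows "ip d u (mv d D w) = cnj (ip d w (mv d D u))"
proof -
  have "cnj (ip d w (mv d D u)) = (\<Sum>j<d. \<Sum>i<d. w j * (cnj (D j i) * cnj (u i)))"
    unfolding ip_def mv_def by (simp add: sum_distrib_left)
  also have "\<dots> = (\<Sum>j<d. \<Sum>i<d. w j * (D i j * cnj (u i)))"
  proof (intro sum.cong refl)
    fix j i assume "j \<in> {..<d}" "i \<in> {..<d}"
    then have "D j i = cnj (D i j)" using assms by blast
    then show "w j * (cnj (D j i) * cnj (u i)) = w j * (D i j * cnj (u i))" by simp
  qed
  also have "\<dots> = (\<Sum>i<d. \<Sum>j<d. cnj (u i) * (D i j * w j))"
    by (subst sum.swap) (simp add: mult_ac)
  also have "\<dots> = ip d u (mv d D w)"
    unfolding ip_def mv_def by (simp add: sum_distrib_left)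
  finally show ?thesis by simp
qed

lemma mv_cong: "(\<And>j. j < d \<Longrightarrow> u j = w j) \<Longrightarrow> mv d N u i = mv d N w i"
  unfolding mv_def by (intro sum.cong) auto

lemma ip_cong: "(\<And>j. j < d \<Longrightarrow> u j = u' j) \<Longrightarrow> (\<And>j. j < d \<Longrightarrow> w j = w' j) \<Longrightarrow> ip d u w = ip d u' w'"
  unfolding ip_def by (intro sum.cong) auto

lemma mv_add: "mv d N (\<lambda>i. u i + w i) i = mv d N u i + mv d N w i"
  unfolding mv_def by (simp add: sum.distrib algebra_simps)

lemma mv_add_fun: "mv d N (\<lambda>i. u i + w i) = (\<lambda>i. mv d N u i + mv d N w i)"
  by (rule ext, rule mv_add)

lemma ip_add_r: "ip d u (\<lambda>i. v i + w i) = ip d u v + ip d u w"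
  unfolding ip_def by (simp add: sum.distrib algebra_simps)

lemma mv_idm: "i < d \<Longrightarrow> mv d idm u i = u i"
  unfolding mv_def idm_def by (simp add: if_distrib[of "\<lambda>x. x * _"] cong: if_cong)

lemma contraction:
  assumes p0: "psd d N0" and p1: "psd d N1" and s: "\<forall>i<d. \<forall>j<d. N0 i j + N1 i j = idm i j"
  shows "ns d (mv d (\<lambda>i j. N0 i j - N1 i j) \<phi>) \<le> ns d \<phi>"
proof -
  define n0 where "n0 = mv d N0 \<phi>"
  define n1 where "n1 = mv d N1 \<phi>"
  have sum01: "\<And>i. i < d \<Longrightarrow> n0 i + n1 i = \<phi> i"
  proof -
    fix i assume i: "i < d"
    have "n0 i + n1 i = (\<Sum>j<d. (N0 i j + N1 i j) * \<phi> j)"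
      unfolding n0_def n1_def mv_def by (simp add: sum.distrib algebra_simps)
    also have "\<dots> = mv d idm \<phi> i" unfolding mv_def using i s by (intro sum.cong) auto
    finally show "n0 i + n1 i = \<phi> i" using mv_idm[OF i] by simp
  qed
  have mC: "\<And>i. mv d (\<lambda>i j. N0 i j - N1 i j) \<phi> i = n0 i - n1 i"
    unfolding n0_def n1_def mv_def by (simp add: sum_subtractf algebra_simps)
  have N0e: "\<And>i. i < d \<Longrightarrow> mv d N0 n1 i = n1 i - mv d N1 n1 i"
  proof -
    fix i assume i: "i < d"
    have "mv d N0 n1 i + mv d N1 n1 i = (\<Sum>j<d. (N0 i j + N1 i j) * n1 j)"
      unfolding mv_def by (simp add: sum.distrib algebra_simps)
    also have "\<dots> = mv d idm n1 i" unfolding mv_def using i s by (intro sum.cong) auto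
    finally show "mv d N0 n1 i = n1 i - mv d N1 n1 i" using mv_idm[OF i] by (simp add: algebra_simps)
  qed
  have n1eq: "\<And>i. n1 i = mv d N1 (\<lambda>j. n0 j + n1 j) i"
  proof -
    fix i
    have "n1 i = mv d N1 \<phi> i" by (simp add: n1_def)
    also have "\<dots> = mv d N1 (\<lambda>j. n0 j + n1 j) i" by (rule mv_cong) (simp add: sum01)
    finally show "n1 i = mv d N1 (\<lambda>j. n0 j + n1 j) i" .
  qed
  have N1e: "\<And>i. mv d N1 n0 i = n1 i - mv d N1 n1 i"
  proof -
    fix i
    have "n1 i = mv d N1 (\<lambda>j. n0 j + n1 j) i" by (rule n1eq)
    then show "mv d N1 n0 i = n1 i - mv d N1 n1 i" by (simp add: mv_add)
  qed
  have h1: "\<forall>i<d. \<forall>j<d. N1 j i = cnj (N1 i j)" using psd_herm[OF p1] by blast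
  have "ip d n0 n1 = ip d n0 (mv d N1 (\<lambda>j. n0 j + n1 j))"
    by (rule ip_cong, simp, rule n1eq)
  also have "\<dots> = ip d n0 (mv d N1 n0) + ip d n0 (mv d N1 n1)"
    by (simp add: mv_add_fun ip_add_r)
  also have "ip d n0 (mv d N1 n1) = cnj (ip d n1 (mv d N1 n0))" by (rule ip_herm[OF h1])
  also have "ip d n1 (mv d N1 n0) = ip d n1 (mv d N0 n1)"
    by (rule ip_cong) (simp_all add: N0e N1e)
  finally have "Re (ip d n0 n1) = Re (ip d n0 (mv d N1 n0)) + Re (ip d n1 (mv d N0 n1))" by simp
  moreover have "Re (ip d n0 (mv d N1 n0)) \<ge> 0" using psd_ip[OF p1] by blast
  moreover have "Re (ip d n1 (mv d N0 n1)) \<ge> 0" using psd_ip[OF p0] by blast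
  ultimately have pos: "Re (ip d n0 n1) \<ge> 0" by simp
  have "ns d \<phi> - ns d (mv d (\<lambda>i j. N0 i j - N1 i j) \<phi>) = (\<Sum>i<d. (cmod (n0 i + n1 i))\<^sup>2 - (cmod (n0 i - n1 i))\<^sup>2)"
    unfolding ns_def mC by (simp add: sum_subtractf sum01)
  also have "\<dots> = (\<Sum>i<d. 4 * Re (cnj (n0 i) * n1 i))"
    by (intro sum.cong refl) (simp only: cmod_power2, simp add: power2_eq_square algebra_simps)
  also have "\<dots> = 4 * Re (ip d n0 n1)" by (simp add: ip_def Re_sum sum_distrib_left)
  finally have "ns d \<phi> - ns d (mv d (\<lambda>i j. N0 i j - N1 i j) \<phi>) = 4 * Re (ip d n0 n1)" .
  then show ?thesis using pos by linarith
qed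


lemma mtrace_chol:
  assumes "\<forall>i<N. \<forall>j<N. \<tau> i j = (\<Sum>q<K. F q i * cnj (F q j))"
  shows "mtrace N \<tau> = complex_of_real (\<Sum>q<K. ns N (F q))"
proof -
  have "mtrace N \<tau> = (\<Sum>i<N. \<Sum>q<K. F q i * cnj (F q i))"
    unfolding mtrace_def using assms by (intro sum.cong) auto
  also have "\<dots> = (\<Sum>q<K. ip N (F q) (F q))"
    unfolding ip_def by (subst sum.swap) (simp add: mult.commute)
  finally show ?thesis by (simp add: ip_self)
qed

definition offd :: "complex \<Rightarrow> cmat" where
  "offd o' i j = (if i = 0 \<and> j = 1 then o' else if i = 1 \<and> j = 0 then cnj o' else 0)"

lemma block_offd:
  "ip (2*d) \<psi> (mv (2*d) (kron d (offd o') C) \<psi>) =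
    o' * ip d \<psi> (mv d C (\<lambda>s. \<psi> (d+s))) + cnj o' * ip d (\<lambda>s. \<psi> (d+s)) (mv d C \<psi>)"
  unfolding block_ip by (simp add: numeral_2_eq_2 offd_def)

lemma tr_bound:
  fixes \<alpha> \<beta> :: real and d :: nat
  assumes den: "density (2*d) \<tau>"
    and h0: "\<forall>i<d. \<forall>j<d. D0 j i = cnj (D0 i j)" and h1: "\<forall>i<d. \<forall>j<d. D1 j i = cnj (D1 i j)"
    and c0: "\<And>\<phi>. ns d (mv d D0 \<phi>) \<le> ns d \<phi>" and c1: "\<And>\<phi>. ns d (mv d D1 \<phi>) \<le> ns d \<phi>"
    and o0: "cmod o0 = 1" and o1: "cmod o1 = 1"
    and ab: "\<alpha>\<^sup>2 + \<beta>\<^sup>2 \<le> 4"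
  shows "Re (complex_of_real \<alpha> * mtrace (2*d) (mmul (2*d) (kron d (offd o0) D0) \<tau>)
           + complex_of_real \<beta> * mtrace (2*d) (mmul (2*d) (kron d (offd o0) D1) \<tau>)
           + complex_of_real \<beta> * mtrace (2*d) (mmul (2*d) (kron d (offd o1) D0) \<tau>)
           - complex_of_real \<alpha> * mtrace (2*d) (mmul (2*d) (kron d (offd o1) D1) \<tau>)) \<le> 4"
proof -
  obtain F :: "nat \<Rightarrow> nat \<Rightarrow> complex" and K :: nat where FK: "\<forall>i<2*d. \<forall>j<2*d. \<tau> i j = (\<Sum>q<K. F q i * cnj (F q j))"
    using psd_chol[of "2*d" \<tau>] den unfolding density_def by blast
  define E where "E = (\<lambda>q. complex_of_real \<alpha> * (o0 * ip d (F q) (mv d D0 (\<lambda>s. F q (d+s))) + cnj o0 * ip d (\<lambda>s. F q (d+s)) (mv d D0 (F q)))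
           + complex_of_real \<beta> * (o0 * ip d (F q) (mv d D1 (\<lambda>s. F q (d+s))) + cnj o0 * ip d (\<lambda>s. F q (d+s)) (mv d D1 (F q)))
           + complex_of_real \<beta> * (o1 * ip d (F q) (mv d D0 (\<lambda>s. F q (d+s))) + cnj o1 * ip d (\<lambda>s. F q (d+s)) (mv d D0 (F q)))
           - complex_of_real \<alpha> * (o1 * ip d (F q) (mv d D1 (\<lambda>s. F q (d+s))) + cnj o1 * ip d (\<lambda>s. F q (d+s)) (mv d D1 (F q))))"
  have eq: "complex_of_real \<alpha> * mtrace (2*d) (mmul (2*d) (kron d (offd o0) D0) \<tau>)
           + complex_of_real \<beta> * mtrace (2*d) (mmul (2*d) (kron d (offd o0) D1) \<tau>)
           + complex_of_real \<beta> * mtrace (2*d) (mmul (2*d) (kron d (offd o1) D0) \<tau>)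
           - complex_of_real \<alpha> * mtrace (2*d) (mmul (2*d) (kron d (offd o1) D1) \<tau>) = (\<Sum>q<K. E q)"
    unfolding tr_chol[OF FK] block_offd E_def
    by (simp add: sum.distrib sum_subtractf sum_distrib_left distrib_left)
  have "Re (\<Sum>q<K. E q) \<le> (\<Sum>q<K. 4 * (ns d (F q) + ns d (\<lambda>s. F q (d+s))))"
    unfolding Re_sum
  proof (rule sum_mono)
    fix q
    show "Re (E q) \<le> 4 * (ns d (F q) + ns d (\<lambda>s. F q (d+s)))"
      unfolding E_def
      by (rule gen_bound[OF ip_herm[OF h0] ip_herm[OF h1] c0 c1 o0 o1 ab])
  qed
  also have "\<dots> = 4 * (\<Sum>q<K. ns (2*d) (F q))"
    by (simp add: block_ns sum_distrib_left)
  also have "\<dots> = 4"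
  proof -
    have "complex_of_real (\<Sum>q<K. ns (2*d) (F q)) = 1" using mtrace_chol[OF FK] den unfolding density_def by metis
    then have "(\<Sum>q<K. ns (2*d) (F q)) = 1" using of_real_eq_1_iff by blast
    then show ?thesis by simp
  qed
  finally show ?thesis unfolding eq .
qed


definition sgn3 :: "nat \<Rightarrow> nat \<Rightarrow> nat \<Rightarrow> real" where
  "sgn3 x y z = (-1) ^ (x*y + y*z + x*z)"

definition Lf :: "(nat \<Rightarrow> nat \<Rightarrow> nat \<Rightarrow> nat \<Rightarrow> nat \<Rightarrow> nat \<Rightarrow> complex) \<Rightarrow> complex" where
  "Lf h = (\<Sum>x\<in>{0,1}. \<Sum>y\<in>{0,1}. \<Sum>z\<in>{0,1}. \<Sum>a\<in>{0,1}. \<Sum>b\<in>{0,1}. \<Sum>c\<in>{0,1}.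
      complex_of_real (sgn3 x y z * (-1) ^ (a+b+c)) * h a b c x y z)"

lemma Lf_add: "Lf (\<lambda>a b c x y z. h1 a b c x y z + h2 a b c x y z) = Lf h1 + Lf h2"
  unfolding Lf_def by (simp add: distrib_left sum.distrib)

lemma Lf_zero: "Lf (\<lambda>a b c x y z. 0) = 0"
  unfolding Lf_def by simp

lemma Lf_scale: "Lf (\<lambda>a b c x y z. k * h a b c x y z) = k * Lf h"
  unfolding Lf_def sum_distrib_left by (simp only: mult.left_commute)

lemma Lf_sum: "finite L \<Longrightarrow> Lf (\<lambda>a b c x y z. \<Sum>l\<in>L. g l a b c x y z) = (\<Sum>l\<in>L. Lf (g l))"
proof (induction L rule: finite_induct)
  case empty then show ?case using Lf_zero by simp
next
  case (insert k L)
  then show ?case using Lf_add[of "g k" "\<lambda>a b c x y z. \<Sum>l\<in>L. g l a b c x y z"] by simp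
qed

lemma Lf_cong: "(\<forall>a\<in>{0,1}. \<forall>b\<in>{0,1}. \<forall>c\<in>{0,1}. \<forall>x\<in>{0,1}. \<forall>y\<in>{0,1}. \<forall>z\<in>{0,1}. h a b c x y z = h' a b c x y z)
   \<Longrightarrow> Lf h = Lf h'"
  unfolding Lf_def by (intro sum.cong refl) auto

definition S3 :: "(nat \<Rightarrow> nat \<Rightarrow> complex) \<Rightarrow> (nat \<Rightarrow> complex) \<Rightarrow> complex" where
  "S3 F G = (G 0 + G 1) * F 0 0 + (G 0 - G 1) * F 0 1 + (G 0 - G 1) * F 1 0 - (G 0 + G 1) * F 1 1"

lemma Lf_prod1: "Lf (\<lambda>a b c x y z. f a b x y * g c z) =
   S3 (\<lambda>x y. f 0 0 x y - f 0 1 x y - f 1 0 x y + f 1 1 x y) (\<lambda>z. g 0 z - g 1 z)"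
  unfolding Lf_def S3_def sgn3_def by (simp add: algebra_simps)

lemma Lf_prod2: "Lf (\<lambda>a b c x y z. f a x * g b c y z) =
   S3 (\<lambda>y z. g 0 0 y z - g 0 1 y z - g 1 0 y z + g 1 1 y z) (\<lambda>x. f 0 x - f 1 x)"
  unfolding Lf_def S3_def sgn3_def by (simp add: algebra_simps)

lemma Lf_prod3: "Lf (\<lambda>a b c x y z. f b y * g a c x z) =
   S3 (\<lambda>x z. g 0 0 x z - g 0 1 x z - g 1 0 x z + g 1 1 x z) (\<lambda>y. f 0 y - f 1 y)"
  unfolding Lf_def S3_def sgn3_def by (simp add: algebra_simps)


lemma T_comb4: "mtrace n (mmul n M1 \<tau>) - mtrace n (mmul n M2 \<tau>) - mtrace n (mmul n M3 \<tau>) + mtrace n (mmul n M4 \<tau>)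
  = mtrace n (mmul n (\<lambda>i j. M1 i j - M2 i j - M3 i j + M4 i j) \<tau>)"
  unfolding mtrace_def mmul_def by (simp add: left_diff_distrib distrib_right sum.distrib sum_subtractf)

lemma T_comb2: "mtrace n (mmul n M1 \<tau>) - mtrace n (mmul n M2 \<tau>) = mtrace n (mmul n (\<lambda>i j. M1 i j - M2 i j) \<tau>)"
  unfolding mtrace_def mmul_def by (simp add: left_diff_distrib sum_subtractf)

lemma kron_comb: "(\<lambda>i j. kron d (proj Ob 0) (proj Qb 0) i j - kron d (proj Ob 0) (proj Qb 1) i j
     - kron d (proj Ob 1) (proj Qb 0) i j + kron d (proj Ob 1) (proj Qb 1) i j) = kron d Ob Qb"
  by (intro ext) (simp add: kron_def proj_def field_simps)

lemma kron_comb_N: "(\<lambda>i j. kron d (proj Ob 0) (N0) i j - kron d (proj Ob 0) N1 i j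
     - kron d (proj Ob 1) N0 i j + kron d (proj Ob 1) N1 i j) = kron d Ob (\<lambda>i j. N0 i j - N1 i j)"
  by (intro ext) (simp add: kron_def proj_def field_simps)

lemma proj_comb: "(\<lambda>i j. proj Ob 0 i j - proj Ob 1 i j) = Ob"
  by (intro ext) (simp add: proj_def field_simps)

lemma tr_kron_cong:
  assumes "\<forall>a<2. \<forall>b<2. A a b = A' a b" "\<forall>s<d. \<forall>t<d. C s t = C' s t"
  shows "mtrace (2*d) (mmul (2*d) (kron d A C) \<tau>) = mtrace (2*d) (mmul (2*d) (kron d A' C') \<tau>)"
  unfolding mtrace_def mmul_def
proof (intro sum.cong refl)
  fix i k assume "i \<in> {..<2*d}" "k \<in> {..<2*d}"
  then have "i < 2*d" "k < 2*d" by auto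
  then have "d > 0" "i div d < 2" "k div d < 2" "i mod d < d" "k mod d < d"
    by (auto simp: less_mult_imp_div_less mult.commute)
  then show "kron d A C i k * \<tau> k i = kron d A' C' i k * \<tau> k i"
    unfolding kron_def using assms by simp
qed

definition om :: complex where "om = (1 + \<i>) / complex_of_real (sqrt 2)"

lemma cmod_om: "cmod om = 1"
proof -
  have "cmod (1 + \<i>) = sqrt 2" by (simp add: cmod_def)
  then show ?thesis by (simp add: om_def norm_divide)
qed

lemma cmod_cnj_om: "cmod (cnj om) = 1" using cmod_om by simp

lemma obsA_offd: "\<forall>a<2. \<forall>b<2. obsA x a b = offd (if x = 0 then 1 else - \<i>) a b"
  by (auto simp: obsA_def offd_def sigma_x_def sigma_y_def less_2_cases_iff)

lemma obsB_offd: "\<forall>a<2. \<forall>b<2. obsB y a b = offd (if y = 0 then om else cnj om) a b"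
  by (auto simp: obsB_def offd_def sigma_x_def sigma_y_def less_2_cases_iff om_def)

lemma offd_herm: "\<forall>i<2. \<forall>j<2. offd o' j i = cnj (offd o' i j)"
  by (auto simp: offd_def less_2_cases_iff)

lemma offd_contr: "cmod o' = 1 \<Longrightarrow> ns 2 (mv 2 (offd o') \<phi>) \<le> ns 2 \<phi>"
  by (simp add: ns_def mv_def offd_def numeral_2_eq_2 norm_mult)


lemma tr2_expand: "mtrace 2 (mmul 2 M \<rho>) = M 0 0 * \<rho> 0 0 + M 0 1 * \<rho> 1 0 + M 1 0 * \<rho> 0 1 + M 1 1 * \<rho> 1 1"
  by (simp add: mtrace_def mmul_def numeral_2_eq_2)

lemma dens2_offdiag:
  assumes "density 2 \<rho>"
  shows "(cmod (\<rho> 0 1))\<^sup>2 \<le> 1/4"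
proof -
  have psd: "psd 2 \<rho>" and tr: "\<rho> 0 0 + \<rho> 1 1 = 1" using assms
    by (auto simp: density_def mtrace_def numeral_2_eq_2)
  have h10: "\<rho> 1 0 = cnj (\<rho> 0 1)" using psd_herm[OF psd, of 0 1] by simp
  have d0: "Im (\<rho> 0 0) = 0 \<and> Re (\<rho> 0 0) \<ge> 0"
    using qf_e[of 0 2 \<rho>] psd_qf[OF psd, where v="\<lambda>i. if i = 0 then 1 else 0"] by simp
  have d1: "Im (\<rho> 1 1) = 0 \<and> Re (\<rho> 1 1) \<ge> 0"
    using qf_e[of 1 2 \<rho>] psd_qf[OF psd, where v="\<lambda>i. if i = 1 then 1 else 0"] by simp
  define p0 where "p0 = Re (\<rho> 0 0)"
  define p1 where "p1 = Re (\<rho> 1 1)"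
  have r0: "\<rho> 0 0 = complex_of_real p0" using d0 p0_def by (simp add: complex_eq_iff)
  have r1: "\<rho> 1 1 = complex_of_real p1" using d1 p1_def by (simp add: complex_eq_iff)
  have sum1: "p0 + p1 = 1" using tr r0 r1 by (metis Re_complex_of_real one_complex.sel(1) plus_complex.sel(1))
  have key: "(cmod (\<rho> 0 1))\<^sup>2 \<le> p0 * p1"
  proof (cases "p1 = 0")
    case True
    then have "\<rho> 1 1 = 0" using r1 by simp
    then have "\<rho> 1 0 = 0" using psd_row_zero[OF psd, of 1 0] by simp
    then have "\<rho> 0 1 = 0" using h10 by simp
    then show ?thesis using True by simp
  next
    case False
    then have p1pos: "p1 > 0" using d1 p1_def by simp
    define z where "z = \<rho> 0 1"
    have "Re (ip 2 (\<lambda>m. if m = 0 then complex_of_real p1 else if m = 1 then - cnj z else 0)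
            (mv 2 \<rho> (\<lambda>m. if m = 0 then complex_of_real p1 else if m = 1 then - cnj z else 0))) \<ge> 0"
      using psd_ip[OF psd] by blast
    moreover have "ip 2 (\<lambda>m. if m = 0 then complex_of_real p1 else if m = 1 then - cnj z else 0)
            (mv 2 \<rho> (\<lambda>m. if m = 0 then complex_of_real p1 else if m = 1 then - cnj z else 0))
         = complex_of_real (p1 * (p0 * p1 - (cmod z)\<^sup>2))"
      using qf_two[of 0 2 1 "complex_of_real p1" "- cnj z" \<rho>] r0 r1 h10 z_def
      by (simp add: complex_norm_square[symmetric] algebra_simps power2_eq_square)
    ultimately have "p1 * (p0 * p1 - (cmod z)\<^sup>2) \<ge> 0" by simp
    then have "p0 * p1 - (cmod z)\<^sup>2 \<ge> 0" using p1pos by (simp add: zero_le_mult_iff)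
    then show ?thesis using z_def by simp
  qed
  have "p0 * p1 \<le> 1/4"
  proof -
    have sq: "0 \<le> (p0 - p1)\<^sup>2" by simp
    have s2: "(p0+p1)\<^sup>2 = 1" using sum1 by simp
    have "p0*p1 = ((p0+p1)\<^sup>2 - (p0-p1)\<^sup>2) / 4" by (simp add: power2_eq_square algebra_simps)
    then have e: "p0*p1 = (1 - (p0-p1)\<^sup>2) / 4" unfolding s2 .
    define t where "t = (p0-p1)\<^sup>2"
    have "p0*p1 = (1 - t)/4" "t \<ge> 0" using e sq unfolding t_def by auto
    then show ?thesis by simp
  qed
  then show ?thesis using key by simp
qed

lemma tr_offd_2:
  assumes "density 2 \<rho>" "cmod o' = 1"
  shows "mtrace 2 (mmul 2 (offd o') \<rho>) = complex_of_real (Re (mtrace 2 (mmul 2 (offd o') \<rho>)))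
     \<and> \<bar>Re (mtrace 2 (mmul 2 (offd o') \<rho>))\<bar> \<le> 1"
proof -
  have psd: "psd 2 \<rho>" using assms by (simp add: density_def)
  have h10: "\<rho> 1 0 = cnj (\<rho> 0 1)" using psd_herm[OF psd, of 0 1] by simp
  define z where "z = o' * cnj (\<rho> 0 1)"
  have e: "mtrace 2 (mmul 2 (offd o') \<rho>) = z + cnj z"
    unfolding tr2_expand z_def using h10 by (simp add: offd_def mult.commute)
  have r: "z + cnj z = complex_of_real (2 * Re z)" by (simp add: complex_eq_iff)
  have cz: "cmod z \<le> 1/2"
  proof -
    have "(cmod z)\<^sup>2 \<le> 1/4" using dens2_offdiag[OF assms(1)] assms(2) by (simp add: z_def norm_mult)
    then have "(cmod z)\<^sup>2 \<le> (1/2)\<^sup>2" by (simp add: power2_eq_square)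
    then show ?thesis using power2_le_imp_le by fastforce
  qed
  have "\<bar>Re z\<bar> \<le> cmod z" by (rule abs_Re_le_cmod)
  then show ?thesis unfolding e r using cz by simp
qed


lemma tr2_cong: "\<forall>a<2. \<forall>b<2. A a b = A' a b \<Longrightarrow> mtrace 2 (mmul 2 A \<rho>) = mtrace 2 (mmul 2 A' \<rho>)"
  by (simp add: tr2_expand)

lemma type1_bound:
  assumes den: "density 4 \<rho>"
    and pc: "\<forall>z\<in>{0,1}. (\<forall>c\<in>{0,1}. PC c z \<ge> (0::real)) \<and> PC 0 z + PC 1 z = 1"
  shows "Re (Lf (\<lambda>a b c x y z. mtrace 4 (mmul 4 (kron 2 (MA a x) (MB b y)) \<rho>) * complex_of_real (PC c z))) \<le> 4"
proof -
  define T where "T = (\<lambda>x y. mtrace (2*2) (mmul (2*2) (kron 2 (offd (if x = (0::nat) then 1 else - \<i>)) (offd (if y = (0::nat) then om else cnj om))) \<rho>))"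
  have F: "\<And>x y. mtrace 4 (mmul 4 (kron 2 (MA 0 x) (MB 0 y)) \<rho>) - mtrace 4 (mmul 4 (kron 2 (MA 0 x) (MB 1 y)) \<rho>)
      - mtrace 4 (mmul 4 (kron 2 (MA 1 x) (MB 0 y)) \<rho>) + mtrace 4 (mmul 4 (kron 2 (MA 1 x) (MB 1 y)) \<rho>) = T x y"
  proof -
    fix x y :: nat
    have "mtrace 4 (mmul 4 (kron 2 (MA 0 x) (MB 0 y)) \<rho>) - mtrace 4 (mmul 4 (kron 2 (MA 0 x) (MB 1 y)) \<rho>)
      - mtrace 4 (mmul 4 (kron 2 (MA 1 x) (MB 0 y)) \<rho>) + mtrace 4 (mmul 4 (kron 2 (MA 1 x) (MB 1 y)) \<rho>)
      = mtrace (2*2) (mmul (2*2) (kron 2 (obsA x) (obsB y)) \<rho>)"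
      unfolding T_comb4 MA_def MB_def kron_comb by simp
    also have "\<dots> = T x y" unfolding T_def by (rule tr_kron_cong[OF obsA_offd obsB_offd])
    finally show "mtrace 4 (mmul 4 (kron 2 (MA 0 x) (MB 0 y)) \<rho>) - mtrace 4 (mmul 4 (kron 2 (MA 0 x) (MB 1 y)) \<rho>)
      - mtrace 4 (mmul 4 (kron 2 (MA 1 x) (MB 0 y)) \<rho>) + mtrace 4 (mmul 4 (kron 2 (MA 1 x) (MB 1 y)) \<rho>) = T x y" .
  qed
  define g0 where "g0 = PC 0 0 - PC 1 0"
  define g1 where "g1 = PC 0 1 - PC 1 1"
  have gb: "(g0 + g1)\<^sup>2 + (g0 - g1)\<^sup>2 \<le> 4"
  proof -
    have "\<bar>g0\<bar> \<le> 1" "\<bar>g1\<bar> \<le> 1" using pc unfolding g0_def g1_def by auto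
    then have "g0\<^sup>2 \<le> 1" "g1\<^sup>2 \<le> 1" by (auto simp: abs_le_square_iff[of _ 1, simplified])
    then show ?thesis by (simp add: power2_eq_square algebra_simps)
  qed
  have "Lf (\<lambda>a b c x y z. mtrace 4 (mmul 4 (kron 2 (MA a x) (MB b y)) \<rho>) * complex_of_real (PC c z))
     = complex_of_real (g0 + g1) * T 0 0 + complex_of_real (g0 - g1) * T 0 1
       + complex_of_real (g0 - g1) * T 1 0 - complex_of_real (g0 + g1) * T 1 1"
    unfolding Lf_prod1 F S3_def g0_def g1_def by simp
  also have "Re \<dots> \<le> 4"
  proof -
    have tb: "Re (complex_of_real (g0+g1) * mtrace (2*2) (mmul (2*2) (kron 2 (offd 1) (offd om)) \<rho>)
           + complex_of_real (g0-g1) * mtrace (2*2) (mmul (2*2) (kron 2 (offd 1) (offd (cnj om))) \<rho>)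
           + complex_of_real (g0-g1) * mtrace (2*2) (mmul (2*2) (kron 2 (offd (-\<i>)) (offd om)) \<rho>)
           - complex_of_real (g0+g1) * mtrace (2*2) (mmul (2*2) (kron 2 (offd (-\<i>)) (offd (cnj om))) \<rho>)) \<le> 4"
    proof -
      have den': "density (2*2) \<rho>" using den by simp
      have o1: "cmod (1::complex) = 1" by simp
      have o2: "cmod (- \<i>) = 1" by simp
      show ?thesis
        by (rule tr_bound[OF den' offd_herm offd_herm offd_contr[OF cmod_om] offd_contr[OF cmod_cnj_om] o1 o2 gb])
    qed
    then show ?thesis unfolding T_def by simp
  qed
  finally show ?thesis .
qed


lemma povm_herm: "povm2 d N \<Longrightarrow> \<forall>i<d. \<forall>j<d. (\<lambda>i j. N 0 i j - N 1 i j) j i = cnj ((\<lambda>i j. N 0 i j - N 1 i j) i j)"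
proof (intro allI impI)
  fix i j assume h: "povm2 d N" and ij: "i < d" "j < d"
  have p0: "psd d (N 0)" and p1: "psd d (N 1)" using h by (simp_all add: povm2_def)
  have "N 0 j i = cnj (N 0 i j)" by (rule psd_herm[OF p0 ij])
  moreover have "N 1 j i = cnj (N 1 i j)" by (rule psd_herm[OF p1 ij])
  ultimately show "(\<lambda>i j. N 0 i j - N 1 i j) j i = cnj ((\<lambda>i j. N 0 i j - N 1 i j) i j)" by simp
qed

lemma povm_contr: "povm2 d N \<Longrightarrow> ns d (mv d (\<lambda>i j. N 0 i j - N 1 i j) \<phi>) \<le> ns d \<phi>"
proof -
  assume h: "povm2 d N"
  have p0: "psd d (N 0)" and p1: "psd d (N 1)" and s: "\<forall>i<d. \<forall>j<d. N 0 i j + N 1 i j = idm i j"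
    using h by (simp_all add: povm2_def)
  show ?thesis by (rule contraction[OF p0 p1 s])
qed

lemma type2_bound:
  assumes denA: "density 2 \<rho>" and den: "density (2*d) \<tau>"
    and pov: "\<forall>z\<in>{0,1}. povm2 d (\<lambda>c. N c z)"
  shows "Re (Lf (\<lambda>a b c x y z. mtrace 2 (mmul 2 (MA a x) \<rho>) * mtrace (2*d) (mmul (2*d) (kron d (MB b y) (N c z)) \<tau>))) \<le> 4"
proof -
  define T where "T = (\<lambda>y z. mtrace (2*d) (mmul (2*d) (kron d (offd (if y = (0::nat) then om else cnj om)) (\<lambda>i j. N 0 z i j - N 1 z i j)) \<tau>))"
  have F: "\<And>y z. mtrace (2*d) (mmul (2*d) (kron d (MB 0 y) (N 0 z)) \<tau>) - mtrace (2*d) (mmul (2*d) (kron d (MB 0 y) (N 1 z)) \<tau>)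
      - mtrace (2*d) (mmul (2*d) (kron d (MB 1 y) (N 0 z)) \<tau>) + mtrace (2*d) (mmul (2*d) (kron d (MB 1 y) (N 1 z)) \<tau>) = T y z"
  proof -
    fix y z :: nat
    have "mtrace (2*d) (mmul (2*d) (kron d (MB 0 y) (N 0 z)) \<tau>) - mtrace (2*d) (mmul (2*d) (kron d (MB 0 y) (N 1 z)) \<tau>)
      - mtrace (2*d) (mmul (2*d) (kron d (MB 1 y) (N 0 z)) \<tau>) + mtrace (2*d) (mmul (2*d) (kron d (MB 1 y) (N 1 z)) \<tau>)
      = mtrace (2*d) (mmul (2*d) (kron d (obsB y) (\<lambda>i j. N 0 z i j - N 1 z i j)) \<tau>)"
      unfolding T_comb4 MB_def kron_comb_N ..
    also have "\<dots> = T y z" unfolding T_def by (rule tr_kron_cong[OF obsB_offd]) simp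
    finally show "mtrace (2*d) (mmul (2*d) (kron d (MB 0 y) (N 0 z)) \<tau>) - mtrace (2*d) (mmul (2*d) (kron d (MB 0 y) (N 1 z)) \<tau>)
      - mtrace (2*d) (mmul (2*d) (kron d (MB 1 y) (N 0 z)) \<tau>) + mtrace (2*d) (mmul (2*d) (kron d (MB 1 y) (N 1 z)) \<tau>) = T y z" .
  qed
  define s where "s = (\<lambda>x. Re (mtrace 2 (mmul 2 (offd (if x = (0::nat) then 1 else - \<i>)) \<rho>)))"
  have G: "\<And>x. mtrace 2 (mmul 2 (MA 0 x) \<rho>) - mtrace 2 (mmul 2 (MA 1 x) \<rho>) = complex_of_real (s x) \<and> \<bar>s x\<bar> \<le> 1"
  proof -
    fix x :: nat
    have "mtrace 2 (mmul 2 (MA 0 x) \<rho>) - mtrace 2 (mmul 2 (MA 1 x) \<rho>) = mtrace 2 (mmul 2 (obsA x) \<rho>)"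
      unfolding T_comb2 MA_def proj_comb ..
    also have "\<dots> = mtrace 2 (mmul 2 (offd (if x = (0::nat) then 1 else - \<i>)) \<rho>)"
      by (rule tr2_cong[OF obsA_offd])
    finally show "mtrace 2 (mmul 2 (MA 0 x) \<rho>) - mtrace 2 (mmul 2 (MA 1 x) \<rho>) = complex_of_real (s x) \<and> \<bar>s x\<bar> \<le> 1"
      using tr_offd_2[OF denA, of "if x = (0::nat) then 1 else - \<i>"] unfolding s_def by simp
  qed
  have gb: "(s 0 + s 1)\<^sup>2 + (s 0 - s 1)\<^sup>2 \<le> 4"
  proof -
    have "\<bar>s 0\<bar> \<le> 1" "\<bar>s 1\<bar> \<le> 1" using G by auto
    then have "(s 0)\<^sup>2 \<le> 1" "(s 1)\<^sup>2 \<le> 1" by (auto simp: abs_le_square_iff[of _ 1, simplified])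
    then show ?thesis by (simp add: power2_eq_square algebra_simps)
  qed
  have "Lf (\<lambda>a b c x y z. mtrace 2 (mmul 2 (MA a x) \<rho>) * mtrace (2*d) (mmul (2*d) (kron d (MB b y) (N c z)) \<tau>))
     = complex_of_real (s 0 + s 1) * T 0 0 + complex_of_real (s 0 - s 1) * T 0 1
       + complex_of_real (s 0 - s 1) * T 1 0 - complex_of_real (s 0 + s 1) * T 1 1"
    unfolding Lf_prod2 F S3_def using G by simp
  also have "Re \<dots> \<le> 4"
  proof -
    have p0: "povm2 d (\<lambda>c. N c 0)" and p1: "povm2 d (\<lambda>c. N c 1)" using pov by auto
    show ?thesis unfolding T_def
      using tr_bound[OF den povm_herm[OF p0] povm_herm[OF p1] povm_contr[OF p0] povm_contr[OF p1] cmod_om cmod_cnj_om gb]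
      by simp
  qed
  finally show ?thesis .
qed

lemma type3_bound:
  assumes denB: "density 2 \<rho>" and den: "density (2*d) \<tau>"
    and pov: "\<forall>z\<in>{0,1}. povm2 d (\<lambda>c. N c z)"
  shows "Re (Lf (\<lambda>a b c x y z. mtrace 2 (mmul 2 (MB b y) \<rho>) * mtrace (2*d) (mmul (2*d) (kron d (MA a x) (N c z)) \<tau>))) \<le> 4"
proof -
  define T where "T = (\<lambda>x z. mtrace (2*d) (mmul (2*d) (kron d (offd (if x = (0::nat) then 1 else - \<i>)) (\<lambda>i j. N 0 z i j - N 1 z i j)) \<tau>))"
  have F: "\<And>x z. mtrace (2*d) (mmul (2*d) (kron d (MA 0 x) (N 0 z)) \<tau>) - mtrace (2*d) (mmul (2*d) (kron d (MA 0 x) (N 1 z)) \<tau>)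
      - mtrace (2*d) (mmul (2*d) (kron d (MA 1 x) (N 0 z)) \<tau>) + mtrace (2*d) (mmul (2*d) (kron d (MA 1 x) (N 1 z)) \<tau>) = T x z"
  proof -
    fix x z :: nat
    have "mtrace (2*d) (mmul (2*d) (kron d (MA 0 x) (N 0 z)) \<tau>) - mtrace (2*d) (mmul (2*d) (kron d (MA 0 x) (N 1 z)) \<tau>)
      - mtrace (2*d) (mmul (2*d) (kron d (MA 1 x) (N 0 z)) \<tau>) + mtrace (2*d) (mmul (2*d) (kron d (MA 1 x) (N 1 z)) \<tau>)
      = mtrace (2*d) (mmul (2*d) (kron d (obsA x) (\<lambda>i j. N 0 z i j - N 1 z i j)) \<tau>)"
      unfolding T_comb4 MA_def kron_comb_N ..
    also have "\<dots> = T x z" unfolding T_def by (rule tr_kron_cong[OF obsA_offd]) simp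
    finally show "mtrace (2*d) (mmul (2*d) (kron d (MA 0 x) (N 0 z)) \<tau>) - mtrace (2*d) (mmul (2*d) (kron d (MA 0 x) (N 1 z)) \<tau>)
      - mtrace (2*d) (mmul (2*d) (kron d (MA 1 x) (N 0 z)) \<tau>) + mtrace (2*d) (mmul (2*d) (kron d (MA 1 x) (N 1 z)) \<tau>) = T x z" .
  qed
  define s where "s = (\<lambda>y. Re (mtrace 2 (mmul 2 (offd (if y = (0::nat) then om else cnj om)) \<rho>)))"
  have G: "\<And>y. mtrace 2 (mmul 2 (MB 0 y) \<rho>) - mtrace 2 (mmul 2 (MB 1 y) \<rho>) = complex_of_real (s y) \<and> \<bar>s y\<bar> \<le> 1"
  proof -
    fix y :: nat
    have "mtrace 2 (mmul 2 (MB 0 y) \<rho>) - mtrace 2 (mmul 2 (MB 1 y) \<rho>) = mtrace 2 (mmul 2 (obsB y) \<rho>)"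
      unfolding T_comb2 MB_def proj_comb ..
    also have "\<dots> = mtrace 2 (mmul 2 (offd (if y = (0::nat) then om else cnj om)) \<rho>)"
      by (rule tr2_cong[OF obsB_offd])
    finally show "mtrace 2 (mmul 2 (MB 0 y) \<rho>) - mtrace 2 (mmul 2 (MB 1 y) \<rho>) = complex_of_real (s y) \<and> \<bar>s y\<bar> \<le> 1"
      using tr_offd_2[OF denB, of "if y = (0::nat) then om else cnj om"] cmod_om cmod_cnj_om unfolding s_def by simp
  qed
  have gb: "(s 0 + s 1)\<^sup>2 + (s 0 - s 1)\<^sup>2 \<le> 4"
  proof -
    have "\<bar>s 0\<bar> \<le> 1" "\<bar>s 1\<bar> \<le> 1" using G by auto
    then have "(s 0)\<^sup>2 \<le> 1" "(s 1)\<^sup>2 \<le> 1" by (auto simp: abs_le_square_iff[of _ 1, simplified])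
    then show ?thesis by (simp add: power2_eq_square algebra_simps)
  qed
  have "Lf (\<lambda>a b c x y z. mtrace 2 (mmul 2 (MB b y) \<rho>) * mtrace (2*d) (mmul (2*d) (kron d (MA a x) (N c z)) \<tau>))
     = complex_of_real (s 0 + s 1) * T 0 0 + complex_of_real (s 0 - s 1) * T 0 1
       + complex_of_real (s 0 - s 1) * T 1 0 - complex_of_real (s 0 + s 1) * T 1 1"
    unfolding Lf_prod3 F S3_def using G by simp
  also have "Re \<dots> \<le> 4"
  proof -
    have p0: "povm2 d (\<lambda>c. N c 0)" and p1: "povm2 d (\<lambda>c. N c 1)" using pov by auto
    have o1: "cmod (1::complex) = 1" by simp
    have o2: "cmod (- \<i>) = 1" by simp
    show ?thesis unfolding T_def
      using tr_bound[OF den povm_herm[OF p0] povm_herm[OF p1] povm_contr[OF p0] povm_contr[OF p1] o1 o2 gb]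
      by simp
  qed
  finally show ?thesis .
qed


lemma re_weighted:
  assumes "finite L" "\<forall>l\<in>L. w l \<ge> 0" "\<forall>l\<in>L. Re (X l) \<le> 4"
  shows "Re (\<Sum>l\<in>L. complex_of_real (w l) * X l) \<le> 4 * (\<Sum>l\<in>L. w l)"
proof -
  have "Re (\<Sum>l\<in>L. complex_of_real (w l) * X l) = (\<Sum>l\<in>L. w l * Re (X l))" by (simp add: Re_sum)
  also have "\<dots> \<le> (\<Sum>l\<in>L. w l * 4)" using assms by (intro sum_mono mult_left_mono) auto
  finally show ?thesis by (simp add: sum_distrib_right mult.commute)
qed

lemma model_bound:
  assumes "stlhs P"
  shows "Re (Lf (\<lambda>a b c x y z. complex_of_real (P a b c x y z))) \<le> 4"
proof -
  obtain L :: "nat set" and r p q :: "nat \<Rightarrow> real" and rhoAB :: "nat \<Rightarrow> cmat" and PC :: "nat \<Rightarrow> nat \<Rightarrow> nat \<Rightarrow> real"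
    and rhoA rhoB :: "nat \<Rightarrow> cmat" and dBC :: "nat \<Rightarrow> nat" and tauBC :: "nat \<Rightarrow> cmat" and NBC :: "nat \<Rightarrow> nat \<Rightarrow> nat \<Rightarrow> cmat"
    and dAC :: "nat \<Rightarrow> nat" and tauAC :: "nat \<Rightarrow> cmat" and NAC :: "nat \<Rightarrow> nat \<Rightarrow> nat \<Rightarrow> cmat" where
    fin: "finite L" and
    wts: "\<forall>l\<in>L. r l \<ge> 0 \<and> p l \<ge> 0 \<and> q l \<ge> 0" and
    tot: "(\<Sum>l\<in>L. r l + p l + q l) = 1" and
    st: "\<forall>l\<in>L.
        density 4 (rhoAB l) \<and> density 2 (rhoA l) \<and> density 2 (rhoB l) \<and>
        (\<forall>z\<in>{0,1}. (\<forall>c\<in>{0,1}. PC l c z \<ge> 0) \<and> PC l 0 z + PC l 1 z = 1) \<and>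
        dBC l \<ge> 1 \<and> density (2 * dBC l) (tauBC l) \<and>
        (\<forall>z\<in>{0,1}. povm2 (dBC l) (\<lambda>c. NBC l c z)) \<and>
        dAC l \<ge> 1 \<and> density (2 * dAC l) (tauAC l) \<and>
        (\<forall>z\<in>{0,1}. povm2 (dAC l) (\<lambda>c. NAC l c z))" and
    eq: "\<forall>a\<in>{0,1}. \<forall>b\<in>{0,1}. \<forall>c\<in>{0,1}. \<forall>x\<in>{0,1}. \<forall>y\<in>{0,1}. \<forall>z\<in>{0,1}.
        complex_of_real (P a b c x y z) =
          (\<Sum>l\<in>L. complex_of_real (r l)
              * mtrace 4 (mmul 4 (kron 2 (MA a x) (MB b y)) (rhoAB l))
              * complex_of_real (PC l c z))
        + (\<Sum>l\<in>L. complex_of_real (p l)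
              * mtrace 2 (mmul 2 (MA a x) (rhoA l))
              * mtrace (2 * dBC l) (mmul (2 * dBC l) (kron (dBC l) (MB b y) (NBC l c z)) (tauBC l)))
        + (\<Sum>l\<in>L. complex_of_real (q l)
              * mtrace 2 (mmul 2 (MB b y) (rhoB l))
              * mtrace (2 * dAC l) (mmul (2 * dAC l) (kron (dAC l) (MA a x) (NAC l c z)) (tauAC l)))"
    using assms unfolding stlhs_def by (elim exE conjE) (rule that; assumption)
  define X1 where "X1 = (\<lambda>l. Lf (\<lambda>a b c x y z. mtrace 4 (mmul 4 (kron 2 (MA a x) (MB b y)) (rhoAB l)) * complex_of_real (PC l c z)))"
  define X2 where "X2 = (\<lambda>l. Lf (\<lambda>a b c x y z. mtrace 2 (mmul 2 (MA a x) (rhoA l)) * mtrace (2 * dBC l) (mmul (2 * dBC l) (kron (dBC l) (MB b y) (NBC l c z)) (tauBC l))))"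
  define X3 where "X3 = (\<lambda>l. Lf (\<lambda>a b c x y z. mtrace 2 (mmul 2 (MB b y) (rhoB l)) * mtrace (2 * dAC l) (mmul (2 * dAC l) (kron (dAC l) (MA a x) (NAC l c z)) (tauAC l))))"
  have "Lf (\<lambda>a b c x y z. complex_of_real (P a b c x y z)) =
     Lf (\<lambda>a b c x y z. ((\<Sum>l\<in>L. complex_of_real (r l)
              * mtrace 4 (mmul 4 (kron 2 (MA a x) (MB b y)) (rhoAB l))
              * complex_of_real (PC l c z))
        + (\<Sum>l\<in>L. complex_of_real (p l)
              * mtrace 2 (mmul 2 (MA a x) (rhoA l))
              * mtrace (2 * dBC l) (mmul (2 * dBC l) (kron (dBC l) (MB b y) (NBC l c z)) (tauBC l))))
        + (\<Sum>l\<in>L. complex_of_real (q l)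
              * mtrace 2 (mmul 2 (MB b y) (rhoB l))
              * mtrace (2 * dAC l) (mmul (2 * dAC l) (kron (dAC l) (MA a x) (NAC l c z)) (tauAC l))))"
    by (rule Lf_cong) (use eq in blast)
  also have "\<dots> = (\<Sum>l\<in>L. complex_of_real (r l) * X1 l) + (\<Sum>l\<in>L. complex_of_real (p l) * X2 l)
      + (\<Sum>l\<in>L. complex_of_real (q l) * X3 l)"
    unfolding Lf_add Lf_sum[OF fin] X1_def X2_def X3_def by (simp only: mult.assoc Lf_scale)
  finally have e: "Lf (\<lambda>a b c x y z. complex_of_real (P a b c x y z)) = (\<Sum>l\<in>L. complex_of_real (r l) * X1 l) + (\<Sum>l\<in>L. complex_of_real (p l) * X2 l)
      + (\<Sum>l\<in>L. complex_of_real (q l) * X3 l)" .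
  have b1: "Re (\<Sum>l\<in>L. complex_of_real (r l) * X1 l) \<le> 4 * (\<Sum>l\<in>L. r l)"
  proof (rule re_weighted[OF fin])
    show "\<forall>l\<in>L. r l \<ge> 0" using wts by auto
    show "\<forall>l\<in>L. Re (X1 l) \<le> 4"
    proof
      fix l assume l: "l \<in> L"
      note H = bspec[OF st l]
      show "Re (X1 l) \<le> 4" unfolding X1_def by (rule type1_bound) (use H in blast)+
    qed
  qed
  have b2: "Re (\<Sum>l\<in>L. complex_of_real (p l) * X2 l) \<le> 4 * (\<Sum>l\<in>L. p l)"
  proof (rule re_weighted[OF fin])
    show "\<forall>l\<in>L. p l \<ge> 0" using wts by auto
    show "\<forall>l\<in>L. Re (X2 l) \<le> 4"
    proof
      fix l assume l: "l \<in> L"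
      note H = bspec[OF st l]
      show "Re (X2 l) \<le> 4" unfolding X2_def by (rule type2_bound) (use H in blast)+
    qed
  qed
  have b3: "Re (\<Sum>l\<in>L. complex_of_real (q l) * X3 l) \<le> 4 * (\<Sum>l\<in>L. q l)"
  proof (rule re_weighted[OF fin])
    show "\<forall>l\<in>L. q l \<ge> 0" using wts by auto
    show "\<forall>l\<in>L. Re (X3 l) \<le> 4"
    proof
      fix l assume l: "l \<in> L"
      note H = bspec[OF st l]
      show "Re (X3 l) \<le> 4" unfolding X3_def by (rule type3_bound) (use H in blast)+
    qed
  qed
  have "(\<Sum>l\<in>L. r l) + (\<Sum>l\<in>L. p l) + (\<Sum>l\<in>L. q l) = 1" using tot by (simp add: sum.distrib)
  then show ?thesis unfolding e using b1 b2 b3 by simp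
qed


lemma svf_S: "Lf (\<lambda>a b c x y z. complex_of_real (svf V a b c x y z)) = complex_of_real (4 * sqrt 2 * V)"
  unfolding Lf_def svf_def sgn3_def by (simp add: field_simps)

lemma no_model: "V > 1 / sqrt 2 \<Longrightarrow> \<not> stlhs (svf V)"
proof
  assume V: "V > 1 / sqrt 2" and m: "stlhs (svf V)"
  have "4 * sqrt 2 * V \<le> 4" using model_bound[OF m] unfolding svf_S by simp
  then have "sqrt 2 * V \<le> 1" by simp
  moreover have "sqrt 2 * V > 1" using V by (simp add: field_simps)
  ultimately show False by simp
qed


definition psi :: "complex \<Rightarrow> nat \<Rightarrow> complex" where
  "psi e i = (if i = 0 then 1 / complex_of_real (sqrt 2) else if i = 3 then e / complex_of_real (sqrt 2) else 0)"

lemma sq2c: "complex_of_real (sqrt 2) * complex_of_real (sqrt 2) = 2"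
  by (simp flip: of_real_mult)

lemma cnj_e: "cmod e = 1 \<Longrightarrow> e * cnj e = 1"
  using complex_norm_square[of e] by simp

lemma sum4: "(\<Sum>i<4::nat. f i) = f 0 + f 1 + f 2 + (f 3 :: complex)"
  by (simp add: numeral_eq_Suc)

lemma pure_tr:
  assumes "cmod e = 1"
  shows "mtrace 4 (mmul 4 M (\<lambda>i j. psi e i * cnj (psi e j))) = (M 0 0 + M 3 3 + M 0 3 * e + M 3 0 * cnj e) / 2"
proof -
  have "mtrace 4 (mmul 4 M (\<lambda>i j. psi e i * cnj (psi e j))) =
     M 0 0 * (psi e 0 * cnj (psi e 0)) + M 0 3 * (psi e 3 * cnj (psi e 0)) + M 3 0 * (psi e 0 * cnj (psi e 3)) + M 3 3 * (psi e 3 * cnj (psi e 3))"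
    unfolding mtrace_def mmul_def sum4 by (simp add: psi_def)
  also have "\<dots> = (M 0 0 + M 3 3 + M 0 3 * e + M 3 0 * cnj e) / 2"
    using cnj_e[OF assms] sq2c by (simp add: psi_def field_simps)
  finally show ?thesis .
qed

lemma proj_entries:
  "proj Ob a 0 0 = (1 + (-1)^a * Ob 0 0) / 2" "proj Ob a 1 1 = (1 + (-1)^a * Ob 1 1) / 2"
  "proj Ob a 0 1 = (-1)^a * Ob 0 1 / 2" "proj Ob a 1 0 = (-1)^a * Ob 1 0 / 2"
  by (simp_all add: proj_def idm_def)

lemma kron4: "kron 2 A B 0 0 = A 0 0 * B 0 0" "kron 2 A B 3 3 = A 1 1 * B 1 1"
   "kron 2 A B 0 3 = A 0 1 * B 0 1" "kron 2 A B 3 0 = A 1 0 * B 1 0"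
  by (simp_all add: kron_def)

definition ox :: "nat \<Rightarrow> complex" where "ox x = (if x = 0 then 1 else - \<i>)"
definition oy :: "nat \<Rightarrow> complex" where "oy y = (if y = 0 then om else cnj om)"

lemma obsA_e: "obsA x 0 0 = 0" "obsA x 1 1 = 0" "obsA x 0 1 = ox x" "obsA x 1 0 = cnj (ox x)"
  using obsA_offd[of x] by (auto simp: offd_def ox_def)
lemma obsB_e: "obsB y 0 0 = 0" "obsB y 1 1 = 0" "obsB y 0 1 = oy y" "obsB y 1 0 = cnj (oy y)"
  using obsB_offd[of y] by (auto simp: offd_def oy_def)

lemma trace_pure:
  assumes "cmod e = 1"
  shows "mtrace 4 (mmul 4 (kron 2 (MA a x) (MB b y)) (\<lambda>i j. psi e i * cnj (psi e j)))
     = complex_of_real ((1 + (-1)^(a+b) * Re (ox x * oy y * e)) / 4)"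
proof -
  define z where "z = ox x * oy y * e"
  have "mtrace 4 (mmul 4 (kron 2 (MA a x) (MB b y)) (\<lambda>i j. psi e i * cnj (psi e j)))
      = (1/4 + 1/4 + (-1)^a * (-1)^b * (z + cnj z) / 4) / 2"
    unfolding pure_tr[OF assms] z_def kron4 MA_def MB_def proj_entries obsA_e obsB_e
    by (simp add: field_simps)
  also have "\<dots> = complex_of_real ((1 + (-1)^(a+b) * Re z) / 4)"
    by (simp add: complex_eq_iff power_add)
  finally show ?thesis unfolding z_def .
qed


lemma om_cnj: "om * cnj om = 1" using cnj_e[OF cmod_om] .
lemma om_sq: "om * om = \<i>"
proof -
  have "om * om = (1 + \<i>) * (1 + \<i>) / (complex_of_real (sqrt 2) * complex_of_real (sqrt 2))"
    by (simp add: om_def)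
  also have "\<dots> = \<i>" unfolding sq2c by (simp add: algebra_simps)
  finally show ?thesis .
qed
lemma com_sq: "cnj om * cnj om = - \<i>"
proof -
  have "cnj om * cnj om = cnj (om * om)" by simp
  then show ?thesis unfolding om_sq by simp
qed

definition el :: "nat \<Rightarrow> complex" where
  "el l = (if l = 0 then cnj om else if l = 1 then - cnj om else if l = 2 then om else - om)"

definition gt :: "nat \<Rightarrow> nat \<Rightarrow> nat \<Rightarrow> real" where
  "gt l x y = (let F = (if x = 0 \<and> y = 0 then 1 else if x = 1 \<and> y = 1 then -1 else 0);
                   G = (if x \<noteq> y then 1 else 0)
               in if l = 0 then F else if l = 1 then - F else if l = 2 then G else - G)"

lemma cmod_el: "cmod (el l) = 1"
  using cmod_om by (simp add: el_def)

lemma Re_om: "Re om = sqrt 2 / 2" and Im_om: "Im om = sqrt 2 / 2"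
  by (simp_all add: om_def Re_divide Im_divide power2_eq_square)

lemma om_half: "sqrt 2 / 2 * (sqrt 2 / 2) = (1/2::real)"
  by (simp add: field_simps)

lemma table: "x \<in> {0,1} \<Longrightarrow> y \<in> {0,1} \<Longrightarrow> Re (ox x * oy y * el l) = gt l x y"
  by (auto simp: ox_def oy_def el_def gt_def mult.assoc om_cnj om_sq com_sq mult.commute[of om "cnj om"] Re_om Im_om om_half)

lemma kron_diag: "kron 2 A B 0 0 = A 0 0 * B 0 0" "kron 2 A B 1 1 = A 0 0 * B 1 1"
   "kron 2 A B 2 2 = A 1 1 * B 0 0" "kron 2 A B 3 3 = A 1 1 * B 1 1"
  by (simp_all add: kron_def)

lemma trace_mixed: "mtrace 4 (mmul 4 (kron 2 (MA a x) (MB b y)) (\<lambda>i j. idm i j / 4)) = complex_of_real (1/4)"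
proof -
  have "mtrace 4 (mmul 4 (kron 2 (MA a x) (MB b y)) (\<lambda>i j. idm i j / 4))
      = (\<Sum>i<4. kron 2 (MA a x) (MB b y) i i / 4)"
    unfolding mtrace_def mmul_def
  proof (intro sum.cong refl)
    fix i assume "i \<in> {..<4::nat}"
    have "(\<Sum>k<4. kron 2 (MA a x) (MB b y) i k * (idm k i / 4)) = (\<Sum>k<4. if k = i then kron 2 (MA a x) (MB b y) i i / 4 else 0)"
      by (intro sum.cong refl) (simp add: idm_def)
    then show "(\<Sum>k<4. kron 2 (MA a x) (MB b y) i k * (idm k i / 4)) = kron 2 (MA a x) (MB b y) i i / 4"
      using \<open>i \<in> {..<4}\<close> by simp
  qed
  also have "\<dots> = complex_of_real (1/4)"
    unfolding sum4 kron_diag MA_def MB_def proj_entries obsA_e obsB_e by simp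
  finally show ?thesis .
qed


definition gam :: "nat \<Rightarrow> nat \<Rightarrow> nat" where
  "gam l z = (if l = 0 then 0 else if l = 1 then 1 else if l = 2 then z else 1 - z)"
definition pcf :: "nat \<Rightarrow> nat \<Rightarrow> nat \<Rightarrow> real" where
  "pcf l c z = (if l < 4 then (if c = gam l z then 1 else 0) else 1/2)"
definition rr :: "real \<Rightarrow> nat \<Rightarrow> real" where
  "rr t l = (if l < 4 then t/4 else 1 - t)"
definition Trf :: "nat \<Rightarrow> nat \<Rightarrow> nat \<Rightarrow> nat \<Rightarrow> nat \<Rightarrow> real" where
  "Trf l a b x y = (if l < 4 then (1 + (-1)^(a+b) * gt l x y)/4 else 1/4)"

lemma sum5: "(\<Sum>l<5::nat. f l) = f 0 + f 1 + f 2 + f 3 + (f 4 :: real)"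
  by (simp add: numeral_eq_Suc)

lemma real_eq:
  assumes "a \<in> {0,1}" "b \<in> {0,1}" "c \<in> {0,1}" "x \<in> {0,1}" "y \<in> {0,1}" "z \<in> {0,1}"
  shows "svf V a b c x y z = (\<Sum>l<5. rr (sqrt 2 * V) l * Trf l a b x y * pcf l c z)"
  using assms unfolding sum5
  by (auto simp: svf_def rr_def Trf_def pcf_def gam_def gt_def field_simps)


lemma psd_outer: "psd n (\<lambda>i j. u i * cnj (u j))"
proof -
  have eq: "\<And>v. (\<Sum>i<n. \<Sum>j<n. cnj (v i) * (u i * cnj (u j)) * v j) = (\<Sum>i<n. cnj (v i) * u i) * cnj (\<Sum>i<n. cnj (v i) * u i)"
    by (simp add: sum_product mult_ac, rule sum.swap)
  show ?thesis unfolding psd_def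
  proof
    fix v
    define z where "z = (\<Sum>i<n. cnj (v i) * u i)"
    have "(\<Sum>i<n. \<Sum>j<n. cnj (v i) * (u i * cnj (u j)) * v j) = complex_of_real ((cmod z)\<^sup>2)"
      unfolding complex_norm_square z_def by (rule eq)
    then show "Im (\<Sum>i<n. \<Sum>j<n. cnj (v i) * (u i * cnj (u j)) * v j) = 0 \<and> Re (\<Sum>i<n. \<Sum>j<n. cnj (v i) * (u i * cnj (u j)) * v j) \<ge> 0"
      by simp
  qed
qed

lemma psd_idm_scale: "(k::real) \<ge> 0 \<Longrightarrow> psd n (\<lambda>i j. complex_of_real k * idm i j)"
proof -
  assume k: "k \<ge> 0"
  have "\<And>v. (\<Sum>i<n. \<Sum>j<n. cnj (v i) * (complex_of_real k * idm i j) * v j) = complex_of_real (k * ns n v)"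
  proof -
    fix v
    have "(\<Sum>i<n. \<Sum>j<n. cnj (v i) * (complex_of_real k * idm i j) * v j) = (\<Sum>i<n. complex_of_real k * (cnj (v i) * v i))"
    proof (intro sum.cong refl)
      fix i assume "i \<in> {..<n}"
      have "(\<Sum>j<n. cnj (v i) * (complex_of_real k * idm i j) * v j) = (\<Sum>j<n. if j = i then complex_of_real k * (cnj (v i) * v i) else 0)"
        by (intro sum.cong refl) (auto simp: idm_def)
      then show "(\<Sum>j<n. cnj (v i) * (complex_of_real k * idm i j) * v j) = complex_of_real k * (cnj (v i) * v i)"
        using \<open>i \<in> {..<n}\<close> by simp
    qed
    also have "\<dots> = complex_of_real k * ip n v v" by (simp add: ip_def sum_distrib_left)
    finally show "(\<Sum>i<n. \<Sum>j<n. cnj (v i) * (complex_of_real k * idm i j) * v j) = complex_of_real (k * ns n v)"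
      by (simp add: ip_self)
  qed
  then show ?thesis unfolding psd_def using k ns_nonneg by simp
qed

lemma trace_idm_scale: "mtrace n (\<lambda>i j. complex_of_real k * idm i j) = complex_of_real (k * n)"
  by (simp add: mtrace_def idm_def)

lemma density_idm: "0 < n \<Longrightarrow> density n (\<lambda>i j. complex_of_real (1 / real n) * idm i j)"
  unfolding density_def using psd_idm_scale[of "1 / real n" n] trace_idm_scale[of n "1 / real n"] by simp

lemma idm4: "(\<lambda>i j. idm i j / 4) = (\<lambda>i j. complex_of_real (1 / real 4) * idm i j)"
  by (intro ext) simp
lemma idm2: "(\<lambda>i j. idm i j / 2) = (\<lambda>i j. complex_of_real (1 / real 2) * idm i j)"
  by (intro ext) simp

lemma dens_idm4: "density 4 (\<lambda>i j. idm i j / 4)" unfolding idm4 by (rule density_idm) simp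
lemma dens_idm2: "density 2 (\<lambda>i j. idm i j / 2)" unfolding idm2 using density_idm[of 2] by simp

lemma dens_pure: "cmod e = 1 \<Longrightarrow> density 4 (\<lambda>i j. psi e i * cnj (psi e j))"
  unfolding density_def
proof (intro conjI psd_outer)
  assume e: "cmod e = 1"
  show "mtrace 4 (\<lambda>i j. psi e i * cnj (psi e j)) = 1"
    unfolding mtrace_def sum4 using cnj_e[OF e] sq2c by (simp add: psi_def field_simps)
qed

lemma povm_triv: "povm2 1 (\<lambda>c i j. if c = 0 then idm i j else 0)"
proof -
  have a: "psd 1 (\<lambda>i j. complex_of_real 1 * idm i j)" by (rule psd_idm_scale) simp
  have b: "psd 1 (\<lambda>i j. complex_of_real 0 * idm i j)" by (rule psd_idm_scale) simp
  show ?thesis unfolding povm2_def using a b by simp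
qed


definition rhoABf :: "nat \<Rightarrow> cmat" where
  "rhoABf l = (if l < 4 then (\<lambda>i j. psi (el l) i * cnj (psi (el l) j)) else (\<lambda>i j. idm i j / 4))"

lemma tr_rhoAB: "a \<in> {0,1} \<Longrightarrow> b \<in> {0,1} \<Longrightarrow> x \<in> {0,1} \<Longrightarrow> y \<in> {0,1} \<Longrightarrow>
  mtrace 4 (mmul 4 (kron 2 (MA a x) (MB b y)) (rhoABf l)) = complex_of_real (Trf l a b x y)"
proof (cases "l < 4")
  case True
  assume hx: "x \<in> {0,1}" and hy: "y \<in> {0,1}"
  have "mtrace 4 (mmul 4 (kron 2 (MA a x) (MB b y)) (rhoABf l)) = complex_of_real ((1 + (-1)^(a+b) * Re (ox x * oy y * el l)) / 4)"
    unfolding rhoABf_def if_P[OF True] by (rule trace_pure[OF cmod_el])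
  also have "\<dots> = complex_of_real (Trf l a b x y)" unfolding table[OF hx hy] Trf_def if_P[OF True] ..
  finally show ?thesis .
next
  case False
  then show ?thesis unfolding rhoABf_def Trf_def by (simp add: trace_mixed)
qed

lemma model_exists:
  assumes V0: "0 < V" and V1: "V \<le> 1 / sqrt 2"
  shows "stlhs (svf V)"
proof -
  define t where "t = sqrt 2 * V"
  have t0: "0 \<le> t" and t1: "t \<le> 1" using V0 V1 by (auto simp: t_def field_simps)
  let ?L = "{..<5::nat}"
  let ?r = "rr t"
  let ?p = "\<lambda>l::nat. 0::real"
  let ?D = "\<lambda>l::nat. \<lambda>i j. idm i j / 2"
  let ?N = "\<lambda>(l::nat) (c::nat) (z::nat) (i::nat) (j::nat). if c = 0 then idm i j else 0"
  have eq: "\<forall>a\<in>{0,1}. \<forall>b\<in>{0,1}. \<forall>c\<in>{0,1}. \<forall>x\<in>{0,1}. \<forall>y\<in>{0,1}. \<forall>z\<in>{0,1}.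
        complex_of_real (svf V a b c x y z) =
          (\<Sum>l\<in>?L. complex_of_real (?r l)
              * mtrace 4 (mmul 4 (kron 2 (MA a x) (MB b y)) (rhoABf l))
              * complex_of_real (pcf l c z))
        + (\<Sum>l\<in>?L. complex_of_real (?p l)
              * mtrace 2 (mmul 2 (MA a x) (?D l))
              * mtrace (2 * 1) (mmul (2 * 1) (kron 1 (MB b y) (?N l c z)) (?D l)))
        + (\<Sum>l\<in>?L. complex_of_real (?p l)
              * mtrace 2 (mmul 2 (MB b y) (?D l))
              * mtrace (2 * 1) (mmul (2 * 1) (kron 1 (MA a x) (?N l c z)) (?D l)))"
  proof (intro ballI)
    fix a b c x y z :: nat
    assume h: "a \<in> {0,1}" "b \<in> {0,1}" "c \<in> {0,1}" "x \<in> {0,1}" "y \<in> {0,1}" "z \<in> {0,1}"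
    have "(\<Sum>l\<in>?L. complex_of_real (?r l) * mtrace 4 (mmul 4 (kron 2 (MA a x) (MB b y)) (rhoABf l)) * complex_of_real (pcf l c z))
        = (\<Sum>l\<in>?L. complex_of_real (?r l * Trf l a b x y * pcf l c z))"
      using tr_rhoAB[OF h(1,2,4,5)] by simp
    also have "\<dots> = complex_of_real (svf V a b c x y z)"
      unfolding real_eq[OF h, of V] t_def of_real_sum ..
    finally show "complex_of_real (svf V a b c x y z) =
          (\<Sum>l\<in>?L. complex_of_real (?r l)
              * mtrace 4 (mmul 4 (kron 2 (MA a x) (MB b y)) (rhoABf l))
              * complex_of_real (pcf l c z))
        + (\<Sum>l\<in>?L. complex_of_real (?p l)
              * mtrace 2 (mmul 2 (MA a x) (?D l))
              * mtrace (2 * 1) (mmul (2 * 1) (kron 1 (MB b y) (?N l c z)) (?D l)))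
        + (\<Sum>l\<in>?L. complex_of_real (?p l)
              * mtrace 2 (mmul 2 (MB b y) (?D l))
              * mtrace (2 * 1) (mmul (2 * 1) (kron 1 (MA a x) (?N l c z)) (?D l)))" by simp
  qed
  have wts: "\<forall>l\<in>?L. ?r l \<ge> 0 \<and> ?p l \<ge> 0 \<and> ?p l \<ge> 0" using t0 t1 by (auto simp: rr_def)
  have tot: "(\<Sum>l\<in>?L. ?r l + ?p l + ?p l) = 1" by (simp add: sum5 rr_def)
  have st: "\<forall>l\<in>?L.
        density 4 (rhoABf l) \<and> density 2 (?D l) \<and> density 2 (?D l) \<and>
        (\<forall>z\<in>{0,1}. (\<forall>c\<in>{0,1}. pcf l c z \<ge> 0) \<and> pcf l 0 z + pcf l 1 z = 1) \<and>
        (1::nat) \<ge> 1 \<and> density (2 * 1) (?D l) \<and>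
        (\<forall>z\<in>{0,1}. povm2 1 (\<lambda>c. ?N l c z)) \<and>
        (1::nat) \<ge> 1 \<and> density (2 * 1) (?D l) \<and>
        (\<forall>z\<in>{0,1}. povm2 1 (\<lambda>c. ?N l c z))"
  proof
    fix l assume "l \<in> ?L"
    have "density 4 (rhoABf l)"
      by (cases "l < 4") (simp_all add: rhoABf_def dens_pure[OF cmod_el] dens_idm4)
    moreover have "\<forall>z\<in>{0,1}. (\<forall>c\<in>{0,1}. pcf l c z \<ge> 0) \<and> pcf l 0 z + pcf l 1 z = 1"
      by (auto simp: pcf_def gam_def)
    ultimately show "density 4 (rhoABf l) \<and> density 2 (?D l) \<and> density 2 (?D l) \<and>
        (\<forall>z\<in>{0,1}. (\<forall>c\<in>{0,1}. pcf l c z \<ge> 0) \<and> pcf l 0 z + pcf l 1 z = 1) \<and>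
        (1::nat) \<ge> 1 \<and> density (2 * 1) (?D l) \<and>
        (\<forall>z\<in>{0,1}. povm2 1 (\<lambda>c. ?N l c z)) \<and>
        (1::nat) \<ge> 1 \<and> density (2 * 1) (?D l) \<and>
        (\<forall>z\<in>{0,1}. povm2 1 (\<lambda>c. ?N l c z))"
      using dens_idm2 povm_triv by simp
  qed
  show ?thesis unfolding stlhs_def
    apply (rule exI[where x="?L"], rule exI[where x="?r"], rule exI[where x="?p"], rule exI[where x="?p"])
    apply (rule exI[where x="rhoABf"], rule exI[where x="pcf"], rule exI[where x="?D"], rule exI[where x="?D"])
    apply (rule exI[where x="\<lambda>l. 1"], rule exI[where x="?D"], rule exI[where x="?N"])
    apply (rule exI[where x="\<lambda>l. 1"], rule exI[where x="?D"], rule exI[where x="?N"])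
    using wts tot st eq by simp
qed


theorem proposition1:
  fixes V :: real
  assumes "0 < V" and "V \<le> 1"
  shows "genuine_steering_1sdi (svf V) \<longleftrightarrow> V > 1 / sqrt 2"
proof
  assume h: "genuine_steering_1sdi (svf V)"
  show "V > 1 / sqrt 2"
  proof (rule ccontr)
    assume "\<not> V > 1 / sqrt 2"
    then have "V \<le> 1 / sqrt 2" by simp
    then have "stlhs (svf V)" using model_exists assms(1) by blast
    then show False using h unfolding genuine_steering_1sdi_def by simp
  qed
next
  assume "V > 1 / sqrt 2"
  then show "genuine_steering_1sdi (svf V)" unfolding genuine_steering_1sdi_def by (rule no_model)
qed

end
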